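(* For $0\le i\le N-1$ and $k\ge0$: (i) $H^{(i)}_k(u+\frac i2)=(-1)^i\delta_{ik}$ if $0\le k\le N-1$, and for $k\ge N$, \[ H^{(i)}_k\Bigl(u+\frac i2\Bigr)=-\det_{1\le j,l\le k-N+1}\Bigl(T^{(\lambda'_j-j+l)}_1\Bigl(u+\frac{N-2-\lambda'_j+j+l}{2}\Bigr)\Bigr),\qquad \lambda'_j=1+(N-i-1)\delta_{j1}. \] (ii) If $F$ is a field containing $\mathcal K$ and $w_1,\dots,w_N:\mathbb C\to F$ satisfy $L(u)w_m(u)=0$ for all $m$ with $[0,1,\dots,N-1]\neq0$ for all $u$, then for all $k\ge0$ \[ H^{(i)}_k\Bigl(u+\frac i2\Bigr)=-\frac{[0,1,\dots,i-1,i+1,\dots,N-1,k]}{[0,1,\dots,N-1]}. \]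
   Context: Fix an integer $n\ge 2$ and put $N=2n+2$. Let $Q_a(u)$ ($1\le a\le n$, $u\in\mathbb C$) be algebraically independent commuting indeterminates, $\mathcal K$ the field of fractions of $\mathbb Z[Q_a(u)^{\pm1}]$. Put $d_a=1+\delta_{an}$, $Y_a(u)=Q_a(u-\frac{d_a}{2})/Q_a(u+\frac{d_a}{2})$ for $1\le a\le n$, $Y_0(u)=1$. Let $J=\{1\prec2\prec\cdots\prec n\prec\bar n\prec\cdots\prec\bar2\prec\bar1\}$. For $1\le a\le n$ set $z_a(u)=\frac{Y_a(u+\frac a2)}{Y_{a-1}(u+\frac{a+1}2)}$, $z_{\bar a}(u)=\frac{Y_{a-1}(u+\frac{2n-a+3}2)}{Y_a(u+\frac{2n-a+4}2)}$; set $x_a(u)=z_a(u)$, $x_{2n+3-a}(u)=z_{\bar a}(u)$ for $1\le a\le n$, and $x_{n+1}(u)=-x_{n+2}(u)=\frac{Q_n(u+\frac n2)Q_n(u+\frac{n+4}2)}{Q_n(u+\frac{n+2}2)^2}$. $D$ is the shift operator ($D\,c(u)=c(u+1)D$), acting on $w:\mathbb C\to F$ by $(\sum_jc_jD^j)w(u)=\sum_jc_j(u)w(u+j)$. Define $L(u)=\prod_{i=1}^{N}(x_i(u+n+1-i)-D)$, factors ordered $i=1,\dots,N$ from left to right. For $1\le a\le n$ define $T^{(a)}_1(u)$ by $T^{(a)}_1(u+\frac12)=\sum\prod_{k=1}^a z_{i_k}(u+\frac{a+1-2k}{2})$ over $(i_1,\dots,i_a)\in J^a$ with $i_1\prec\cdots\prec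 i_a$ such that whenever $i_k=c$, $i_l=\bar c$ ($1\le c\le n$) one has $n+k-l\ge c$. Set $T^{(0)}_1=1$, $T^{(a)}_1=0$ for $a<0$, $T^{(n+1)}_1=0$, $T^{(a)}_1=-T^{(N-a)}_1$ for $a\ge n+2$ (so $T^{(N)}_1=-1$, $T^{(a)}_1=0$ for $a>N$). Define $H^{(i)}_k(u)$ for $0\le i\le N-1$, $k\in\mathbb Z_{\ge0}$, $u\in\mathbb C$ by $H^{(i)}_0(u)=\delta_{i0}$ and the recursion $H^{(i)}_{k+1}(u+\frac i2)=-T^{(i)}_1(u+\frac i2)H^{(N-1)}_k(u+\frac{N+1}2)-H^{(i-1)}_k(u+\frac{i+1}2)$, with $H^{(-1)}_k:=0$. A determinant of size $0$ is $1$. Casorati determinants: for integers $i_1,\dots,i_m$ ($m\le N$), $[i_1,\dots,i_m]$ is the function $u\mapsto\det(w_r(u+i_s))_{1\le r,s\le m}$. *)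

theory Defs
  imports Main "Jordan_Normal_Form.Determinant"
begin

(* Q :: nat => complex => 'a  gives the images Q_a(u) (1 <= a <= n) in the field 'a. *)

text \<open>The field 'a contains the field of fractions K of Z[Q_a(u)^{+-1}] exactly when
  the family Q_a(u) (1<=a<=n, u complex) is algebraically independent over Z in 'a:
  the evaluation map Z[X_{a,u}] -> 'a is injective.  Polynomials are given by
  finitely supported integer coefficient functions on finitely supported exponent vectors.\<close>
definition alg_indep_Q :: "nat \<Rightarrow> (nat \<Rightarrow> complex \<Rightarrow> 'a::field) \<Rightarrow> bool" where
  "alg_indep_Q n Q \<longleftrightarrow>
     (\<forall>c :: (nat \<times> complex \<Rightarrow> nat) \<Rightarrow> int.
        finite {e. c e \<noteq> 0} \<longrightarrow>
        (\<forall>e. c e \<noteq> 0 \<longrightarrow> finite {x. e x \<noteq> 0} \<and> {x. e x \<noteq> 0} \<subseteq> {1..n} \<times> UNIV) \<longrightarrow>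
        (\<Sum>e\<in>{e. c e \<noteq> 0}. of_int (c e) * (\<Prod>x\<in>{x. e x \<noteq> 0}. Q (fst x) (snd x) ^ e x)) = 0 \<longrightarrow>
        (\<forall>e. c e = 0))"

definition dd :: "nat \<Rightarrow> nat \<Rightarrow> complex" where
  "dd n a = (if a = n then 2 else 1)"

definition Yf :: "nat \<Rightarrow> (nat \<Rightarrow> complex \<Rightarrow> 'a::field) \<Rightarrow> nat \<Rightarrow> complex \<Rightarrow> 'a" where
  "Yf n Q a u = (if a = 0 then 1 else Q a (u - dd n a / 2) / Q a (u + dd n a / 2))"

definition zU :: "nat \<Rightarrow> (nat \<Rightarrow> complex \<Rightarrow> 'a::field) \<Rightarrow> nat \<Rightarrow> complex \<Rightarrow> 'a" where
  "zU n Q a u = Yf n Q a (u + of_nat a / 2) / Yf n Q (a - 1) (u + (of_nat a + 1) / 2)"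

definition zB :: "nat \<Rightarrow> (nat \<Rightarrow> complex \<Rightarrow> 'a::field) \<Rightarrow> nat \<Rightarrow> complex \<Rightarrow> 'a" where
  "zB n Q a u = Yf n Q (a - 1) (u + (2 * of_nat n - of_nat a + 3) / 2)
                / Yf n Q a (u + (2 * of_nat n - of_nat a + 4) / 2)"

text \<open>The ordered alphabet J = {1 < ... < n < bar n < ... < bar 1} is encoded by positions
  1..2n: position p <= n is the letter p, position p > n is the letter bar (2n+1-p).\<close>
definition zJ :: "nat \<Rightarrow> (nat \<Rightarrow> complex \<Rightarrow> 'a::field) \<Rightarrow> nat \<Rightarrow> complex \<Rightarrow> 'a" where
  "zJ n Q p u = (if p \<le> n then zU n Q p u else zB n Q (2 * n + 1 - p) u)"

definition xX :: "nat \<Rightarrow> (nat \<Rightarrow> complex \<Rightarrow> 'a::field) \<Rightarrow> complex \<Rightarrow> 'a" where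
  "xX n Q u = Q n (u + of_nat n / 2) * Q n (u + (of_nat n + 4) / 2) / (Q n (u + (of_nat n + 2) / 2))^2"

(* x_i for 1 <= i <= N = 2n+2 *)
definition xf :: "nat \<Rightarrow> (nat \<Rightarrow> complex \<Rightarrow> 'a::field) \<Rightarrow> nat \<Rightarrow> complex \<Rightarrow> 'a" where
  "xf n Q i u = (if i \<le> n then zU n Q i u
                 else if i = n + 1 then xX n Q u
                 else if i = n + 2 then - xX n Q u
                 else zB n Q (2 * n + 3 - i) u)"

definition Lfactor :: "nat \<Rightarrow> (nat \<Rightarrow> complex \<Rightarrow> 'a::field) \<Rightarrow> nat \<Rightarrow> (complex \<Rightarrow> 'a) \<Rightarrow> complex \<Rightarrow> 'a" where
  "Lfactor n Q i f u = xf n Q i (u + of_int (int n + 1 - int i)) * f u - f (u + 1)"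

text \<open>L(u) = prod_{i=1..N} (x_i(u+n+1-i) - D), factor 1 leftmost (applied last).\<close>
definition Lop :: "nat \<Rightarrow> (nat \<Rightarrow> complex \<Rightarrow> 'a::field) \<Rightarrow> (complex \<Rightarrow> 'a) \<Rightarrow> complex \<Rightarrow> 'a" where
  "Lop n Q w = foldr (Lfactor n Q) [1..<2 * n + 3] w"

definition admT :: "nat \<Rightarrow> nat \<Rightarrow> nat list set" where
  "admT n a = {is. length is = a \<and> sorted_wrt (<) is \<and> set is \<subseteq> {1..2 * n} \<and>
      (\<forall>k<a. \<forall>l<a. is ! k \<le> n \<and> is ! l = 2 * n + 1 - is ! k \<longrightarrow>
          int n + int k - int l \<ge> int (is ! k))}"

(* T^(a)_1(v) for 1 <= a <= n, with v = u + 1/2 *)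
definition Tbase :: "nat \<Rightarrow> (nat \<Rightarrow> complex \<Rightarrow> 'a::field) \<Rightarrow> nat \<Rightarrow> complex \<Rightarrow> 'a" where
  "Tbase n Q a v = (\<Sum>is\<in>admT n a. \<Prod>j<a.
       zJ n Q (is ! j) (v - 1 / 2 + of_int (int a + 1 - 2 * (int j + 1)) / 2))"

definition Tf :: "nat \<Rightarrow> (nat \<Rightarrow> complex \<Rightarrow> 'a::field) \<Rightarrow> int \<Rightarrow> complex \<Rightarrow> 'a" where
  "Tf n Q a v =
     (if a < 0 then 0
      else if a = 0 then 1
      else if a \<le> int n then Tbase n Q (nat a) v
      else if a = int n + 1 then 0
      else if a < 2 * int n + 2 then - Tbase n Q (nat (2 * int n + 2 - a)) v
      else if a = 2 * int n + 2 then -1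
      else 0)"

text \<open>H^(i)_k(v), with N - 1 = 2n+1 and N + 1 = 2n+3.\<close>
fun Hf :: "nat \<Rightarrow> (nat \<Rightarrow> complex \<Rightarrow> 'a::field) \<Rightarrow> nat \<Rightarrow> nat \<Rightarrow> complex \<Rightarrow> 'a" where
  "Hf n Q i 0 v = (if i = 0 then 1 else 0)"
| "Hf n Q i (Suc k) v =
     - Tf n Q (int i) v * Hf n Q (2 * n + 1) k (v + (of_nat (2 * n + 3) - of_nat i) / 2)
     - (if i = 0 then 0 else Hf n Q (i - 1) k (v + 1 / 2))"

definition casorati :: "(nat \<Rightarrow> complex \<Rightarrow> 'a::field) \<Rightarrow> int list \<Rightarrow> complex \<Rightarrow> 'a" where
  "casorati w is u = det (mat (length is) (length is)
       (\<lambda>(r, s). w (r + 1) (u + of_int (is ! s))))"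

end

theory Submission
  imports Defs
begin

definition admS :: "nat \<Rightarrow> nat set \<Rightarrow> bool" where
  "admS M S \<longleftrightarrow> (\<forall>c\<in>S. c \<le> M \<longrightarrow> (2*M+1-c) \<in> S \<longrightarrow>
      card {y\<in>S. c \<le> y \<and> y < 2*M+1-c} \<le> M - c)"

lemma sorted_lt_unique:
  assumes "sorted_wrt (<) (xs::nat list)" "sorted_wrt (<) ys" "set xs = set ys"
  shows "xs = ys"
  using assms by (simp add: strict_sorted_iff sorted_distinct_set_unique)

lemma idx_set:
  assumes s: "sorted_wrt (<) (xs::nat list)" and k: "k < length xs"
  shows "{y \<in> set xs. y < xs!k} = set (take k xs)"
proof
  show "{y \<in> set xs. y < xs ! k} \<subseteq> set (take k xs)"
  proof
    fix y assume "y \<in> {y \<in> set xs. y < xs ! k}"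
    then obtain j where j: "j < length xs" "y = xs!j" "xs!j < xs!k" by (auto simp: in_set_conv_nth)
    have "j < k"
    proof (rule ccontr)
      assume "\<not> j < k"
      then have "k = j \<or> k < j" by auto
      then show False
      proof
        assume "k = j" then show False using j by simp
      next
        assume "k < j" then have "xs!k < xs!j" using sorted_wrt_nth_less[OF s] j by blast
        then show False using j by simp
      qed
    qed
    then show "y \<in> set (take k xs)" using j k by (auto simp: in_set_conv_nth)
  qed
next
  show "set (take k xs) \<subseteq> {y \<in> set xs. y < xs ! k}"
  proof
    fix y assume "y \<in> set (take k xs)"
    then obtain j where j: "j < k" "y = xs!j" using k by (auto simp: in_set_conv_nth)
    then show "y \<in> {y \<in> set xs. y < xs ! k}" using s k by (auto simp: sorted_wrt_iff_nth_less)
  qed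
qed

lemma idx_card:
  assumes s: "sorted_wrt (<) (xs::nat list)" and k: "k < length xs"
  shows "card {y \<in> set xs. y < xs!k} = k"
proof -
  have d: "distinct xs" using s by (simp add: strict_sorted_iff)
  show ?thesis using idx_set[OF s k] distinct_card[OF distinct_take[OF d]] k by simp
qed

lemma adm_iff:
  assumes s: "sorted_wrt (<) (is::nat list)" and r: "set is \<subseteq> {1..2*M}"
  shows "(\<forall>k<length is. \<forall>l<length is. is!k \<le> M \<and> is!l = 2*M+1-is!k \<longrightarrow> int M + int k - int l \<ge> int (is!k))
     \<longleftrightarrow> admS M (set is)"
proof -
  have key: "card {y\<in>set is. is!k \<le> y \<and> y < is!l} = l - k"
    if kl: "k < length is" "l < length is" "is!k < is!l" for k l
  proof -
    have "k < l" using kl s by (metis linorder_neqE_nat not_less_iff_gr_or_eq sorted_wrt_iff_nth_less)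
    have e: "{y\<in>set is. is!k \<le> y \<and> y < is!l} = {y\<in>set is. y < is!l} - {y\<in>set is. y < is!k}"
      by auto
    have "card ({y\<in>set is. y < is!l} - {y\<in>set is. y < is!k}) = card {y\<in>set is. y < is!l} - card {y\<in>set is. y < is!k}"
      by (rule card_Diff_subset) (use kl in auto)
    then show ?thesis using e idx_card[OF s kl(1)] idx_card[OF s kl(2)] by simp
  qed
  show ?thesis
  proof
    assume A: "\<forall>k<length is. \<forall>l<length is. is!k \<le> M \<and> is!l = 2*M+1-is!k \<longrightarrow> int M + int k - int l \<ge> int (is!k)"
    show "admS M (set is)" unfolding admS_def
    proof (intro ballI impI)
      fix c assume c: "c \<in> set is" "c \<le> M" "2*M+1-c \<in> set is"
      obtain k where k: "k < length is" "is!k = c" using c by (auto simp: in_set_conv_nth)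
      obtain l where l: "l < length is" "is!l = 2*M+1-c" using c by (auto simp: in_set_conv_nth)
      have c1: "c \<ge> 1" using c r by auto
      have "is!k < is!l" using k l c c1 by auto
      from key[OF k(1) l(1) this] have "card {y\<in>set is. c \<le> y \<and> y < 2*M+1-c} = l - k" using k l by simp
      moreover have "int M + int k - int l \<ge> int c" using A k l c by auto
      ultimately show "card {y\<in>set is. c \<le> y \<and> y < 2*M+1-c} \<le> M - c" by linarith
    qed
  next
    assume A: "admS M (set is)"
    show "\<forall>k<length is. \<forall>l<length is. is!k \<le> M \<and> is!l = 2*M+1-is!k \<longrightarrow> int M + int k - int l \<ge> int (is!k)"
    proof (intro allI impI)
      fix k l assume kl: "k < length is" "l < length is" "is!k \<le> M \<and> is!l = 2*M+1-is!k"
      have c1: "is!k \<ge> 1" using kl r nth_mem by fastforce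
      have lt: "is!k < is!l" using kl c1 by auto
      have "k < l" using kl lt s by (metis linorder_neqE_nat not_less_iff_gr_or_eq sorted_wrt_iff_nth_less)
      have m1: "is!k \<in> set is" "2*M+1-is!k \<in> set is" using kl nth_mem by metis+
      have "card {y\<in>set is. is!k \<le> y \<and> y < 2*M+1-is!k} \<le> M - is!k"
        using A kl m1 unfolding admS_def by blast
      then have "l - k \<le> M - is!k" using key[OF kl(1) kl(2) lt] kl by simp
      then show "int M + int k - int l \<ge> int (is!k)" using kl \<open>k<l\<close> by linarith
    qed
  qed
qed

lemma admT_alt: "admT M a = {is. length is = a \<and> sorted_wrt (<) is \<and> set is \<subseteq> {1..2*M} \<and> admS M (set is)}"
  unfolding admT_def using adm_iff by blast

definition bldS :: "nat \<Rightarrow> bool \<Rightarrow> bool \<Rightarrow> nat set \<Rightarrow> nat set" where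
  "bldS M x y T = (if x then {1} else {}) \<union> Suc ` T \<union> (if y then {2*M} else {})"

lemma admS_bld:
  assumes T: "T \<subseteq> {1..2*m}" and fT: "finite T"
  shows "admS (Suc m) (bldS (Suc m) x y T) \<longleftrightarrow> admS m T \<and> (x \<and> y \<longrightarrow> card T + 2 \<le> Suc m)"
proof -
  let ?M = "Suc m"
  let ?S = "bldS ?M x y T"
  have nS1: "1 \<notin> Suc ` T" using T by auto
  have nS2: "2*?M \<notin> Suc ` T" using T by auto
  have mem1: "1 \<in> ?S \<longleftrightarrow> x" using nS1 by (auto simp: bldS_def)
  have mem2: "2*?M \<in> ?S \<longleftrightarrow> y" using nS2 by (auto simp: bldS_def)
  have memS: "Suc c' \<in> ?S \<longleftrightarrow> c' \<in> T" if "c' \<ge> 1" "c' \<le> 2*m" for c'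
    using that by (auto simp: bldS_def)
  have cardS: "card {v\<in>?S. Suc c' \<le> v \<and> v < 2*?M+1-Suc c'} = card {v\<in>T. c' \<le> v \<and> v < 2*m+1-c'}"
    if "c' \<ge> 1" "c' \<le> m" for c'
  proof -
    have "{v\<in>?S. Suc c' \<le> v \<and> v < 2*?M+1-Suc c'} = Suc ` {v\<in>T. c' \<le> v \<and> v < 2*m+1-c'}"
      using that by (auto simp: bldS_def)
    then show ?thesis by (simp add: card_image)
  qed
  have card1: "card {v\<in>?S. 1 \<le> v \<and> v < 2*?M+1-1} = card T + 1" if "x" "y"
  proof -
    have "{v\<in>?S. 1 \<le> v \<and> v < 2*?M+1-1} = insert 1 (Suc ` T)" using that T by (auto simp: bldS_def)
    then show ?thesis using nS1 fT by (simp add: card_image)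
  qed
  show ?thesis
  proof
    assume A: "admS ?M ?S"
    have "admS m T" unfolding admS_def
    proof (intro ballI impI)
      fix c assume c: "c \<in> T" "c \<le> m" "2*m+1-c \<in> T"
      have c1: "c \<ge> 1" using c T by auto
      have "Suc c \<in> ?S" "Suc c \<le> ?M" using memS c c1 by auto
      moreover have "2*?M+1 - Suc c \<in> ?S" using memS[of "2*m+1-c"] c c1 by (simp add: Suc_diff_le)
      ultimately have "card {v\<in>?S. Suc c \<le> v \<and> v < 2*?M+1-Suc c} \<le> ?M - Suc c"
        using A unfolding admS_def by blast
      then show "card {v\<in>T. c \<le> v \<and> v < 2*m+1-c} \<le> m - c" using cardS[OF c1 c(2)] by simp
    qed
    moreover have "card T + 2 \<le> ?M" if "x" "y"
    proof -
      have "1 \<in> ?S" "2*?M+1-1 \<in> ?S" using mem1 mem2 that by auto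
      then have "card {v\<in>?S. 1 \<le> v \<and> v < 2*?M+1-1} \<le> ?M - 1" using A unfolding admS_def by auto
      then show ?thesis using card1[OF that] by simp
    qed
    ultimately show "admS m T \<and> (x \<and> y \<longrightarrow> card T + 2 \<le> ?M)" by blast
  next
    assume A: "admS m T \<and> (x \<and> y \<longrightarrow> card T + 2 \<le> ?M)"
    show "admS ?M ?S" unfolding admS_def
    proof (intro ballI impI)
      fix c assume c: "c \<in> ?S" "c \<le> ?M" "2*?M+1-c \<in> ?S"
      show "card {v\<in>?S. c \<le> v \<and> v < 2*?M+1-c} \<le> ?M - c"
      proof (cases "c = 1")
        case True
        then have "x" using c mem1 by auto
        moreover have "y" using c True mem2 by auto
        ultimately show ?thesis using card1 A True by auto
      next
        case False
        have "c \<in> Suc ` T" using c False by (auto simp: bldS_def split: if_splits)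
        then obtain c' where c': "c = Suc c'" "c' \<in> T" by auto
        have c1: "c' \<ge> 1" "c' \<le> m" using c' T c by auto
        have "Suc (2*m+1-c') \<in> ?S" using c c' c1 by (simp add: Suc_diff_le)
        then have "2*m+1-c' \<in> T" using memS[of "2*m+1-c'"] c1 by auto
        then have "card {v\<in>T. c' \<le> v \<and> v < 2*m+1-c'} \<le> m - c'" using A c' c1 unfolding admS_def by blast
        then show ?thesis using cardS[OF c1] c' by simp
      qed
    qed
  qed
qed


definition bld :: "nat \<Rightarrow> bool \<Rightarrow> bool \<Rightarrow> nat list \<Rightarrow> nat list" where
  "bld M x y js = (if x then [1] else []) @ map Suc js @ (if y then [2*M] else [])"

lemma set_bld: "set (bld M x y js) = bldS M x y (set js)"
  by (auto simp: bld_def bldS_def)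

lemma length_bld: "length (bld M x y js) = length js + (if x then 1 else 0) + (if y then 1 else 0)"
  by (auto simp: bld_def)

lemma sorted_bld:
  assumes "sorted_wrt (<) js" "set js \<subseteq> {1..2*m}"
  shows "sorted_wrt (<) (bld (Suc m) x y js)"
  using assms unfolding bld_def
  by (auto simp: sorted_wrt_append sorted_wrt_map)

lemma range_bld:
  assumes "set js \<subseteq> {1..2*m}"
  shows "set (bld (Suc m) x y js) \<subseteq> {1..2*Suc m}"
  using assms unfolding bld_def by auto

lemma bld_in_admT:
  assumes js: "js \<in> admT m b" and g: "x \<and> y \<longrightarrow> b + 2 \<le> Suc m"
  shows "bld (Suc m) x y js \<in> admT (Suc m) (b + (if x then 1 else 0) + (if y then 1 else 0))"
proof -
  have j: "length js = b" "sorted_wrt (<) js" "set js \<subseteq> {1..2*m}" "admS m (set js)"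
    using js by (auto simp: admT_alt)
  have d: "distinct js" using j by (simp add: strict_sorted_iff)
  have c: "card (set js) = b" using distinct_card[OF d] j by simp
  have "admS (Suc m) (bldS (Suc m) x y (set js))"
    using admS_bld[OF j(3)] j g c by simp
  then show ?thesis using j sorted_bld[OF j(2,3)] range_bld[OF j(3)] length_bld
    by (simp add: admT_alt set_bld)
qed

lemma admT_decomp:
  "admT (Suc m) a = bld (Suc m) False False ` admT m a
     \<union> (if 1 \<le> a then bld (Suc m) True False ` admT m (a-1) else {})
     \<union> (if 1 \<le> a then bld (Suc m) False True ` admT m (a-1) else {})
     \<union> (if 2 \<le> a \<and> a \<le> Suc m then bld (Suc m) True True ` admT m (a-2) else {})"
  (is "?L = ?R")
proof
  show "?R \<subseteq> ?L"
  proof -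
    have "bld (Suc m) False False ` admT m a \<subseteq> ?L" using bld_in_admT[of _ m a False False] by force
    moreover have "bld (Suc m) True False ` admT m (a-1) \<subseteq> ?L" if "1 \<le> a"
      using bld_in_admT[of _ m "a-1" True False] that by force
    moreover have "bld (Suc m) False True ` admT m (a-1) \<subseteq> ?L" if "1 \<le> a"
      using bld_in_admT[of _ m "a-1" False True] that by force
    moreover have "bld (Suc m) True True ` admT m (a-2) \<subseteq> ?L" if "2 \<le> a" "a \<le> Suc m"
    proof (rule image_subsetI)
      fix js assume "js \<in> admT m (a-2)"
      moreover have e: "a - 2 + (if True then 1 else 0) + (if True then 1 else 0) = a" using that by simp
      ultimately show "bld (Suc m) True True js \<in> ?L" using bld_in_admT[of js m "a-2" True True] that
        by (simp only: e) simp
    qed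
    ultimately show ?thesis by auto
  qed
next
  show "?L \<subseteq> ?R"
  proof
    fix xs assume "xs \<in> ?L"
    then have i: "length xs = a" "sorted_wrt (<) xs" "set xs \<subseteq> {1..2*Suc m}" "admS (Suc m) (set xs)"
      by (auto simp: admT_alt)
    define x where "x = (1 \<in> set xs)"
    define y where "y = (2*Suc m \<in> set xs)"
    define T where "T = (\<lambda>v. v - 1) ` (set xs - {1, 2*Suc m})"
    have T: "T \<subseteq> {1..2*m}" using i unfolding T_def by force
    have fT: "finite T" unfolding T_def by simp
    have S: "set xs = bldS (Suc m) x y T"
    proof
      show "set xs \<subseteq> bldS (Suc m) x y T"
      proof
        fix v assume v: "v \<in> set xs"
        show "v \<in> bldS (Suc m) x y T"
        proof (cases "v = 1 \<or> v = 2*Suc m")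
          case True then show ?thesis using v unfolding bldS_def x_def y_def by auto
        next
          case False
          then have "v - 1 \<in> T" using v unfolding T_def by auto
          moreover have "v = Suc (v - 1)" using v i by force
          ultimately show ?thesis unfolding bldS_def by (metis UnI1 UnI2 image_eqI)
        qed
      qed
    next
      show "bldS (Suc m) x y T \<subseteq> set xs"
      proof
        fix v assume "v \<in> bldS (Suc m) x y T"
        then consider "x" "v = 1" | "y" "v = 2*Suc m" | "v \<in> Suc ` T"
          unfolding bldS_def by (auto split: if_splits)
        then show "v \<in> set xs"
        proof cases
          case 3
          then obtain t where t: "v = Suc t" "t \<in> T" by auto
          then obtain v' where v': "v' \<in> set xs" "v' \<noteq> 1" "t = v' - 1" unfolding T_def by auto
          have "v' \<in> {1..2*Suc m}" using v'(1) i(3) by blast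
          then have "v' \<ge> 1" by simp
          then have "v = v'" using t v' by simp
          then show ?thesis using v' by simp
        qed (auto simp: x_def y_def)
      qed
    qed
    define js where "js = sorted_list_of_set T"
    have js: "sorted_wrt (<) js" "set js = T" using fT by (auto simp: js_def)
    have eq: "xs = bld (Suc m) x y js"
      using sorted_lt_unique[OF i(2) sorted_bld[OF js(1)]] T js S set_bld by auto
    have ad: "admS m T \<and> (x \<and> y \<longrightarrow> card T + 2 \<le> Suc m)" using admS_bld[OF T fT] i(4) S by simp
    have cT: "card T = length js" using js by (metis distinct_card strict_sorted_iff)
    have la: "a = length js + (if x then 1 else 0) + (if y then 1 else 0)" using eq i(1) length_bld by metis
    have jsA: "js \<in> admT m (length js)" using js T ad by (simp add: admT_alt)
    show "xs \<in> ?R"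
    proof (cases x; cases y)
      assume xy: "x" "y"
      then have "a = length js + 2" "2 \<le> a" "a \<le> Suc m" "js \<in> admT m (a-2)" using la ad cT jsA by auto
      then show ?thesis using eq xy by simp
    next
      assume xy: "x" "\<not> y"
      then have "a = length js + 1" "js \<in> admT m (a-1)" using la jsA by auto
      then show ?thesis using eq xy by simp
    next
      assume xy: "\<not> x" "y"
      then have "a = length js + 1" "js \<in> admT m (a-1)" using la jsA by auto
      then show ?thesis using eq xy by simp
    next
      assume xy: "\<not> x" "\<not> y"
      then have "a = length js" "js \<in> admT m a" using la jsA by auto
      then show ?thesis using eq xy by simp
    qed
  qed
qed

definition gz :: "nat \<Rightarrow> (nat \<Rightarrow> complex \<Rightarrow> 'a::field) \<Rightarrow> nat \<Rightarrow> complex \<Rightarrow> 'a" where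
  "gz m Ys p u = (if p \<le> m then Ys p (u + of_nat p / 2) / Ys (p - 1) (u + (of_nat p + 1) / 2)
      else Ys (2*m - p) (u + (of_nat p + 2) / 2) / Ys (2*m + 1 - p) (u + (of_nat p + 3) / 2))"

definition shY :: "(nat \<Rightarrow> complex \<Rightarrow> 'a) \<Rightarrow> nat \<Rightarrow> complex \<Rightarrow> 'a" where
  "shY Ys b v = Ys (Suc b) (v + 1/2)"

definition gA :: "nat \<Rightarrow> (nat \<Rightarrow> complex \<Rightarrow> 'a::field) \<Rightarrow> int \<Rightarrow> complex \<Rightarrow> 'a" where
  "gA m Ys a u = (if a < 0 then 0 else
     (\<Sum>is\<in>admT m (nat a). \<Prod>k<nat a. gz m Ys (is!k) (u + of_nat m - of_nat k)))"

lemma div_cong2: "x = x' \<Longrightarrow> y = y' \<Longrightarrow> (f::nat \<Rightarrow> complex \<Rightarrow> 'a::field) b x / f c y = f b x' / f c y'"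
  by simp

lemma gz_sh:
  assumes "1 \<le> p" "p \<le> 2*m"
  shows "gz (Suc m) Ys (Suc p) u = gz m (shY Ys) p u"
proof (cases "p \<le> m")
  case True
  have a: "Suc (p - 1) = p" using assms by simp
  have h1: "u + of_nat (Suc p) / 2 = u + of_nat p / 2 + 1/2" by (simp add: field_simps)
  have h2: "u + (of_nat (Suc p) + 1) / 2 = u + (of_nat p + 1) / 2 + 1/2" by (simp add: field_simps)
  have "gz (Suc m) Ys (Suc p) u = Ys (Suc p) (u + of_nat (Suc p) / 2) / Ys p (u + (of_nat (Suc p) + 1) / 2)"
    using True unfolding gz_def by simp
  also have "\<dots> = gz m (shY Ys) p u" using True a unfolding gz_def shY_def h1 h2 by simp
  finally show ?thesis .
next
  case False
  have a1: "2 * Suc m - Suc p = Suc (2*m - p)" using assms by simp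
  have a2: "2 * Suc m + 1 - Suc p = Suc (2*m + 1 - p)" using assms by simp
  have h1: "u + (of_nat (Suc p) + 2) / 2 = u + (of_nat p + 2) / 2 + 1/2" by (simp add: field_simps)
  have h2: "u + (of_nat (Suc p) + 3) / 2 = u + (of_nat p + 3) / 2 + 1/2" by (simp add: field_simps)
  have "gz (Suc m) Ys (Suc p) u = Ys (2 * Suc m - Suc p) (u + (of_nat (Suc p) + 2) / 2) / Ys (2 * Suc m + 1 - Suc p) (u + (of_nat (Suc p) + 3) / 2)"
  proof -
    have nle: "(Suc p \<le> Suc m) = False" using False by simp
    show ?thesis unfolding gz_def by (simp only: nle if_False)
  qed
  also have "\<dots> = gz m (shY Ys) p u" using False unfolding gz_def shY_def h1 h2 a1 a2 by simp
  finally show ?thesis .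
qed

lemma finite_admT: "finite (admT m a)"
proof -
  have "admT m a \<subseteq> {xs. set xs \<subseteq> {1..2*m} \<and> length xs = a}" unfolding admT_def by auto
  moreover have "finite {xs. set xs \<subseteq> {1..2*m} \<and> length xs = a}" by (rule finite_lists_length_eq) simp
  ultimately show ?thesis by (rule finite_subset)
qed

lemma admT_range: "is \<in> admT m a \<Longrightarrow> set is \<subseteq> {1..2*m} \<and> length is = a"
  unfolding admT_def by auto

lemma mem_bld:
  assumes "set js \<subseteq> {1..2*m}"
  shows "(1 \<in> set (bld (Suc m) x y js) \<longleftrightarrow> x) \<and> (2*Suc m \<in> set (bld (Suc m) x y js) \<longleftrightarrow> y)"
  using assms unfolding bld_def by auto

lemma inj_bld: "inj_on (bld M x y) A"
  by (rule inj_onI) (auto simp: bld_def)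

lemma gA_decomp:
  fixes Ys :: "nat \<Rightarrow> complex \<Rightarrow> 'a::field" and m :: nat and u :: complex and a :: nat
  defines "z1 \<equiv> gz (Suc m) Ys 1 (u + of_nat (Suc m))"
  defines "zb \<equiv> gz (Suc m) Ys (2 * Suc m) (u + of_nat (Suc m) + 1 - of_nat a)"
  shows "gA (Suc m) Ys (int a) u = gA m (shY Ys) (int a) (u+1) + z1 * gA m (shY Ys) (int a - 1) u
     + gA m (shY Ys) (int a - 1) (u+1) * zb
     + (if a \<le> Suc m then z1 * gA m (shY Ys) (int a - 2) u * zb else 0)"
proof -
  let ?M = "Suc m"
  let ?Y = "shY Ys"
  define F where "F xs = (\<Prod>k<a. gz ?M Ys (xs!k) (u + of_nat ?M - of_nat k))" for xs
  define A0 where "A0 = bld ?M False False ` admT m a"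
  define A1 where "A1 = (if 1 \<le> a then bld ?M True False ` admT m (a-1) else {})"
  define A2 where "A2 = (if 1 \<le> a then bld ?M False True ` admT m (a-1) else {})"
  define A3 where "A3 = (if 2 \<le> a \<and> a \<le> ?M then bld ?M True True ` admT m (a-2) else {})"
  have fin: "finite A0" "finite A1" "finite A2" "finite A3"
    unfolding A0_def A1_def A2_def A3_def using finite_admT by auto
  have memb: "\<And>js b x y. js \<in> admT m b \<Longrightarrow> (1 \<in> set (bld ?M x y js) \<longleftrightarrow> x) \<and> (2*?M \<in> set (bld ?M x y js) \<longleftrightarrow> y)"
    using mem_bld admT_range by blast
  have dis: "bld ?M x y ` admT m b \<inter> bld ?M x' y' ` admT m b' = {}" if "(x,y) \<noteq> (x',y')" for x y x' y' b b'
  proof -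
    { fix v assume "v \<in> bld ?M x y ` admT m b" "v \<in> bld ?M x' y' ` admT m b'"
      then obtain js js' where j: "js \<in> admT m b" "v = bld ?M x y js" "js' \<in> admT m b'" "v = bld ?M x' y' js'"
        by blast
      then have "x = x' \<and> y = y'" using memb[of js b x y] memb[of js' b' x' y'] by simp
      then have False using that by simp }
    then show ?thesis by blast
  qed
  have d01: "A0 \<inter> A1 = {}" unfolding A0_def A1_def using dis[of False False True False a "a-1"] by simp
  have d02: "A0 \<inter> A2 = {}" unfolding A0_def A2_def using dis[of False False False True a "a-1"] by simp
  have d03: "A0 \<inter> A3 = {}" unfolding A0_def A3_def using dis[of False False True True a "a-2"] by simp
  have d12: "A1 \<inter> A2 = {}" unfolding A1_def A2_def using dis[of True False False True "a-1" "a-1"] by simp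
  have d13: "A1 \<inter> A3 = {}" unfolding A1_def A3_def using dis[of True False True True "a-1" "a-2"] by simp
  have d23: "A2 \<inter> A3 = {}" unfolding A2_def A3_def using dis[of False True True True "a-1" "a-2"] by simp
  have "gA ?M Ys (int a) u = sum F (admT ?M a)" unfolding gA_def F_def by simp
  also have "admT ?M a = A0 \<union> A1 \<union> A2 \<union> A3" unfolding A0_def A1_def A2_def A3_def by (rule admT_decomp)
  also have "sum F (A0 \<union> A1 \<union> A2 \<union> A3) = sum F A0 + sum F A1 + sum F A2 + sum F A3"
    using fin d01 d02 d03 d12 d13 d23
    by (simp add: sum.union_disjoint Int_Un_distrib Int_Un_distrib2)
  also have "sum F A0 = gA m ?Y (int a) (u+1)"
  proof -
    have "sum F A0 = sum (F \<circ> bld ?M False False) (admT m a)"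
      unfolding A0_def by (rule sum.reindex[OF inj_bld])
    also have "\<dots> = (\<Sum>js\<in>admT m a. \<Prod>k<a. gz m ?Y (js!k) (u + 1 + of_nat m - of_nat k))"
    proof (rule sum.cong[OF refl])
      fix js assume js: "js \<in> admT m a"
      show "(F \<circ> bld ?M False False) js = (\<Prod>k<a. gz m ?Y (js!k) (u + 1 + of_nat m - of_nat k))"
        unfolding F_def comp_def
      proof (rule prod.cong[OF refl])
        fix k assume k: "k \<in> {..<a}"
        have "js!k \<in> set js" using k js admT_range by auto
        then have r: "1 \<le> js!k" "js!k \<le> 2*m" using admT_range[OF js] by auto
        have "bld ?M False False js ! k = Suc (js!k)" using k js admT_range by (simp add: bld_def)
        then show "gz ?M Ys (bld ?M False False js ! k) (u + of_nat ?M - of_nat k) =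
            gz m ?Y (js!k) (u + 1 + of_nat m - of_nat k)"
          using gz_sh[OF r] by (simp add: add_ac)
      qed
    qed
    finally show ?thesis unfolding gA_def by simp
  qed
  also have "sum F A1 = z1 * gA m ?Y (int a - 1) u"
  proof (cases "1 \<le> a")
    case False then show ?thesis unfolding A1_def gA_def by simp
  next
    case True
    have "sum F A1 = sum (F \<circ> bld ?M True False) (admT m (a-1))"
      unfolding A1_def using True by (simp add: sum.reindex[OF inj_bld])
    also have "\<dots> = (\<Sum>js\<in>admT m (a-1). z1 * (\<Prod>k<a-1. gz m ?Y (js!k) (u + of_nat m - of_nat k)))"
    proof (rule sum.cong[OF refl])
      fix js assume js: "js \<in> admT m (a-1)"
      have la: "a = Suc (a-1)" using True by simp
      have "(F \<circ> bld ?M True False) js = gz ?M Ys 1 (u + of_nat ?M) *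
          (\<Prod>k<a-1. gz ?M Ys (bld ?M True False js ! Suc k) (u + of_nat ?M - of_nat (Suc k)))"
        unfolding F_def comp_def by (subst la, subst prod.lessThan_Suc_shift) (simp add: bld_def)
      also have "(\<Prod>k<a-1. gz ?M Ys (bld ?M True False js ! Suc k) (u + of_nat ?M - of_nat (Suc k)))
          = (\<Prod>k<a-1. gz m ?Y (js!k) (u + of_nat m - of_nat k))"
      proof (rule prod.cong[OF refl])
        fix k assume k: "k \<in> {..<a-1}"
        have "js!k \<in> set js" using k js admT_range by auto
        then have r: "1 \<le> js!k" "js!k \<le> 2*m" using admT_range[OF js] by auto
        have "bld ?M True False js ! Suc k = Suc (js!k)" using k js admT_range by (simp add: bld_def)
        then show "gz ?M Ys (bld ?M True False js ! Suc k) (u + of_nat ?M - of_nat (Suc k)) =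
            gz m ?Y (js!k) (u + of_nat m - of_nat k)"
          using gz_sh[OF r] by (simp add: add_diff_eq)
      qed
      finally show "(F \<circ> bld ?M True False) js = z1 * (\<Prod>k<a-1. gz m ?Y (js!k) (u + of_nat m - of_nat k))"
        unfolding z1_def .
    qed
    finally show ?thesis using True unfolding gA_def by (simp add: sum_distrib_left nat_diff_distrib')
  qed
  also have "sum F A2 = gA m ?Y (int a - 1) (u+1) * zb"
  proof (cases "1 \<le> a")
    case False then show ?thesis unfolding A2_def gA_def by simp
  next
    case True
    have "sum F A2 = sum (F \<circ> bld ?M False True) (admT m (a-1))"
      unfolding A2_def using True by (simp add: sum.reindex[OF inj_bld])
    also have "\<dots> = (\<Sum>js\<in>admT m (a-1). (\<Prod>k<a-1. gz m ?Y (js!k) (u + 1 + of_nat m - of_nat k)) * zb)"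
    proof (rule sum.cong[OF refl])
      fix js assume js: "js \<in> admT m (a-1)"
      have la: "a = Suc (a-1)" using True by simp
      have len: "length js = a - 1" using js admT_range by auto
      have "(F \<circ> bld ?M False True) js = 
          (\<Prod>k<a-1. gz ?M Ys (bld ?M False True js ! k) (u + of_nat ?M - of_nat k)) *
           gz ?M Ys (bld ?M False True js ! (a-1)) (u + of_nat ?M - of_nat (a-1))"
        unfolding F_def comp_def by (subst la, subst prod.lessThan_Suc) simp
      also have "gz ?M Ys (bld ?M False True js ! (a-1)) (u + of_nat ?M - of_nat (a-1)) = zb"
        using len True unfolding zb_def by (simp add: bld_def nth_append of_nat_diff algebra_simps)
      also have "(\<Prod>k<a-1. gz ?M Ys (bld ?M False True js ! k) (u + of_nat ?M - of_nat k))
          = (\<Prod>k<a-1. gz m ?Y (js!k) (u + 1 + of_nat m - of_nat k))"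
      proof (rule prod.cong[OF refl])
        fix k assume k: "k \<in> {..<a-1}"
        have "js!k \<in> set js" using k js admT_range by auto
        then have r: "1 \<le> js!k" "js!k \<le> 2*m" using admT_range[OF js] by auto
        have "bld ?M False True js ! k = Suc (js!k)" using k len by (simp add: bld_def nth_append)
        then show "gz ?M Ys (bld ?M False True js ! k) (u + of_nat ?M - of_nat k) =
            gz m ?Y (js!k) (u + 1 + of_nat m - of_nat k)"
          using gz_sh[OF r] by (simp add: add_ac)
      qed
      finally show "(F \<circ> bld ?M False True) js = (\<Prod>k<a-1. gz m ?Y (js!k) (u + 1 + of_nat m - of_nat k)) * zb" .
    qed
    finally show ?thesis using True unfolding gA_def by (simp add: sum_distrib_right nat_diff_distrib')
  qed
  also have "sum F A3 = (if a \<le> Suc m then z1 * gA m ?Y (int a - 2) u * zb else 0)"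
  proof (cases "2 \<le> a \<and> a \<le> ?M")
    case False
    then show ?thesis unfolding A3_def gA_def by auto
  next
    case True
    have "sum F A3 = sum (F \<circ> bld ?M True True) (admT m (a-2))"
      unfolding A3_def using True by (simp add: sum.reindex[OF inj_bld])
    also have "\<dots> = (\<Sum>js\<in>admT m (a-2). z1 * (\<Prod>k<a-2. gz m ?Y (js!k) (u + of_nat m - of_nat k)) * zb)"
    proof (rule sum.cong[OF refl])
      fix js assume js: "js \<in> admT m (a-2)"
      have la: "a = Suc (Suc (a-2))" using True by arith
      have len: "length js = a - 2" using js admT_range by auto
      have "(F \<circ> bld ?M True True) js = 
          gz ?M Ys 1 (u + of_nat ?M) *
          (\<Prod>k<a-2. gz ?M Ys (bld ?M True True js ! Suc k) (u + of_nat ?M - of_nat (Suc k))) *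
           gz ?M Ys (bld ?M True True js ! Suc (a-2)) (u + of_nat ?M - of_nat (Suc (a-2)))"
        unfolding F_def comp_def
        by (subst la, subst prod.lessThan_Suc_shift, subst prod.lessThan_Suc) (simp add: bld_def mult.assoc)
      also have "gz ?M Ys (bld ?M True True js ! Suc (a-2)) (u + of_nat ?M - of_nat (Suc (a-2))) = zb"
      proof -
        have "bld ?M True True js ! Suc (a-2) = 2 * ?M" using len by (simp add: bld_def nth_append)
        moreover have "u + of_nat ?M - of_nat (Suc (a-2)) = u + of_nat ?M + 1 - (of_nat a :: complex)"
          using True by (simp add: of_nat_diff)
        ultimately show ?thesis unfolding zb_def by (simp add: algebra_simps)
      qed
      also have "(\<Prod>k<a-2. gz ?M Ys (bld ?M True True js ! Suc k) (u + of_nat ?M - of_nat (Suc k)))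
          = (\<Prod>k<a-2. gz m ?Y (js!k) (u + of_nat m - of_nat k))"
      proof (rule prod.cong[OF refl])
        fix k assume k: "k \<in> {..<a-2}"
        have "js!k \<in> set js" using k js admT_range by auto
        then have r: "1 \<le> js!k" "js!k \<le> 2*m" using admT_range[OF js] by auto
        have "bld ?M True True js ! Suc k = Suc (js!k)" using k len by (simp add: bld_def nth_append)
        then show "gz ?M Ys (bld ?M True True js ! Suc k) (u + of_nat ?M - of_nat (Suc k)) =
            gz m ?Y (js!k) (u + of_nat m - of_nat k)"
          using gz_sh[OF r] by (simp add: add_diff_eq)
      qed
      finally show "(F \<circ> bld ?M True True) js = z1 * (\<Prod>k<a-2. gz m ?Y (js!k) (u + of_nat m - of_nat k)) * zb"
        unfolding z1_def .
    qed
    finally show ?thesis using True unfolding gA_def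
      by (simp add: sum_distrib_left sum_distrib_right nat_diff_distrib')
  qed
  finally show ?thesis by simp
qed

lemma gA_neg: "a < 0 \<Longrightarrow> gA m Ys a u = 0"
  unfolding gA_def by simp

lemma admT_0: "admT m 0 = {[]}"
  unfolding admT_def by auto

lemma gA_zero: "gA m Ys 0 u = 1"
  unfolding gA_def by (simp add: admT_0)

lemma gA_vanish: "int m < a \<Longrightarrow> gA m Ys a u = 0"
proof (induction m arbitrary: Ys u a)
  case 0
  then have "admT 0 (nat a) = {}" unfolding admT_def by auto
  then show ?case unfolding gA_def by simp
next
  case (Suc m)
  obtain k where k: "a = int k" using Suc.prems by (metis le_less nonneg_int_cases of_nat_0_le_iff order_trans)
  have "gA m (shY Ys) (int k) (u+1) = 0" using Suc k by simp
  moreover have "gA m (shY Ys) (int k - 1) v = 0" for v using Suc k by simp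
  moreover have "\<not> k \<le> Suc m" using Suc.prems k by simp
  ultimately show ?case unfolding k by (subst gA_decomp) simp
qed

definition gC :: "nat \<Rightarrow> (nat \<Rightarrow> complex \<Rightarrow> 'a::field) \<Rightarrow> int \<Rightarrow> complex \<Rightarrow> 'a" where
  "gC m Ys a u = (if a \<le> int m then gA m Ys a u
     else - (Ys 0 (u + of_int (2 * int m + 2 - a)) / Ys 0 (u + of_nat m + 1))
          * gA m Ys (2 * int m + 2 - a) (u + of_int (2 * int m + 2 - a) - of_nat m - 1))"

lemma gC_low: "a \<le> int m + 1 \<Longrightarrow> gC m Ys a u = gA m Ys a u"
  unfolding gC_def by (cases "a \<le> int m") (auto simp: gA_vanish)

lemma gC_out: "a < 0 \<or> a > 2 * int m + 2 \<Longrightarrow> gC m Ys a u = 0"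
  unfolding gC_def by (auto simp: gA_neg)

definition Lf :: "(complex \<Rightarrow> 'a::field) \<Rightarrow> (complex \<Rightarrow> 'a) \<Rightarrow> complex \<Rightarrow> 'a" where
  "Lf x f u = x u * f u - f (u + 1)"

fun gP :: "nat \<Rightarrow> (nat \<Rightarrow> complex \<Rightarrow> 'a::field) \<Rightarrow> (complex \<Rightarrow> 'a) \<Rightarrow> complex \<Rightarrow> 'a" where
  "gP 0 Ys f u = f (u + 2) - Ys 0 u / Ys 0 (u + 1) * f u"
| "gP (Suc m) Ys f u = Lf (\<lambda>v. gz (Suc m) Ys 1 (v + of_nat (Suc m)))
      (gP m (shY Ys) (Lf (\<lambda>v. gz (Suc m) Ys (2 * Suc m) (v - of_nat (Suc m) - 1)) f)) u"

lemma sum_ext_zero: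
  fixes F :: "nat \<Rightarrow> 'b::comm_monoid_add"
  assumes "n \<le> N" "\<And>a. n \<le> a \<Longrightarrow> a < N \<Longrightarrow> F a = 0"
  shows "(\<Sum>a<N. F a) = (\<Sum>a<n. F a)"
proof (rule sum.mono_neutral_right)
  show "finite {..<N}" by simp
  show "{..<n} \<subseteq> {..<N}" using assms(1) by auto
  show "\<forall>i\<in>{..<N} - {..<n}. F i = 0" using assms(2) by auto
qed

lemma comp_lemma:
  fixes c :: "int \<Rightarrow> complex \<Rightarrow> 'a::field"
  assumes P: "\<And>g v. P g v = (\<Sum>a<K+1. (-1)^a * c (int a) v * g (v + of_nat K - of_nat a))"
    and cz: "\<And>a v. a < 0 \<or> a > int K \<Longrightarrow> c a v = 0"
  shows "Lf x (P (Lf y f)) u = (\<Sum>a<K+3. (-1)^a *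
     (c (int a) (u+1) + x u * c (int a - 1) u + c (int a - 1) (u+1) * y (u + of_nat K + 2 - of_nat a)
      + x u * c (int a - 2) u * y (u + of_nat K + 2 - of_nat a)) * f (u + of_nat (K+2) - of_nat a))"
proof -
  define S1 where "S1 = (\<Sum>a<K+1. (-1)^a * c (int a) (u+1) * f (u + of_nat K + 2 - of_nat a))"
  define S2 where "S2 = (\<Sum>a<K+1. (-1)^a * c (int a) u * f (u + of_nat K + 1 - of_nat a))"
  define S3 where "S3 = (\<Sum>a<K+1. (-1)^a * c (int a) (u+1) * y (u + of_nat K + 1 - of_nat a) * f (u + of_nat K + 1 - of_nat a))"
  define S4 where "S4 = (\<Sum>a<K+1. (-1)^a * c (int a) u * y (u + of_nat K - of_nat a) * f (u + of_nat K - of_nat a))"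
  have L: "Lf x (P (Lf y f)) u = x u * (S4 - S2) - (S3 - S1)"
  proof -
    have "P (Lf y f) u = S4 - S2"
      unfolding P S4_def S2_def sum_subtractf[symmetric]
      by (rule sum.cong) (simp_all add: Lf_def algebra_simps)
    moreover have "P (Lf y f) (u+1) = S3 - S1"
      unfolding P S3_def S1_def sum_subtractf[symmetric]
      by (rule sum.cong) (simp_all add: Lf_def algebra_simps)
    ultimately show ?thesis unfolding Lf_def by simp
  qed
  have e3: "K + 3 = Suc (K+2)" "K + 3 = Suc (Suc (K+1))" by simp_all
  have R1: "(\<Sum>a<K+3. (-1)^a * c (int a) (u+1) * f (u + of_nat (K+2) - of_nat a)) = S1"
  proof -
    have "(\<Sum>a<K+3. (-1)^a * c (int a) (u+1) * f (u + of_nat (K+2) - of_nat a))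
        = (\<Sum>a<K+1. (-1)^a * c (int a) (u+1) * f (u + of_nat (K+2) - of_nat a))"
      by (rule sum_ext_zero) (auto simp: cz)
    then show ?thesis unfolding S1_def by (simp add: add_ac)
  qed
  have R2: "(\<Sum>a<K+3. (-1)^a * (x u * c (int a - 1) u) * f (u + of_nat (K+2) - of_nat a)) = - (x u * S2)"
  proof -
    have "(\<Sum>a<K+3. (-1)^a * (x u * c (int a - 1) u) * f (u + of_nat (K+2) - of_nat a))
       = (\<Sum>a<Suc (K+2). (-1)^a * (x u * c (int a - 1) u) * f (u + of_nat (K+2) - of_nat a))" by (simp only: e3)
    also have "\<dots> = (\<Sum>a<K+2. (-1)^(Suc a) * (x u * c (int a) u) * f (u + of_nat (K+2) - of_nat (Suc a)))"
      by (subst sum.lessThan_Suc_shift) (simp add: cz)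
    also have "\<dots> = (\<Sum>a<K+1. (-1)^(Suc a) * (x u * c (int a) u) * f (u + of_nat (K+2) - of_nat (Suc a)))"
      by (rule sum_ext_zero) (auto simp: cz)
    also have "\<dots> = - (x u * S2)" unfolding S2_def sum_distrib_left sum_negf[symmetric]
      by (rule sum.cong) (simp_all add: algebra_simps)
    finally show ?thesis .
  qed
  have R3: "(\<Sum>a<K+3. (-1)^a * (c (int a - 1) (u+1) * y (u + of_nat K + 2 - of_nat a)) * f (u + of_nat (K+2) - of_nat a)) = - S3"
  proof -
    have "(\<Sum>a<K+3. (-1)^a * (c (int a - 1) (u+1) * y (u + of_nat K + 2 - of_nat a)) * f (u + of_nat (K+2) - of_nat a))
       = (\<Sum>a<Suc (K+2). (-1)^a * (c (int a - 1) (u+1) * y (u + of_nat K + 2 - of_nat a)) * f (u + of_nat (K+2) - of_nat a))" by (simp only: e3)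
    also have "\<dots> = (\<Sum>a<K+2. (-1)^(Suc a) * (c (int a) (u+1) * y (u + of_nat K + 2 - of_nat (Suc a))) * f (u + of_nat (K+2) - of_nat (Suc a)))"
      by (subst sum.lessThan_Suc_shift) (simp add: cz)
    also have "\<dots> = (\<Sum>a<K+1. (-1)^(Suc a) * (c (int a) (u+1) * y (u + of_nat K + 2 - of_nat (Suc a))) * f (u + of_nat (K+2) - of_nat (Suc a)))"
      by (rule sum_ext_zero) (auto simp: cz)
    also have "\<dots> = - S3" unfolding S3_def sum_negf[symmetric]
      by (rule sum.cong) (simp_all add: algebra_simps)
    finally show ?thesis .
  qed
  have R4: "(\<Sum>a<K+3. (-1)^a * (x u * c (int a - 2) u * y (u + of_nat K + 2 - of_nat a)) * f (u + of_nat (K+2) - of_nat a)) = x u * S4"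
  proof -
    have "(\<Sum>a<K+3. (-1)^a * (x u * c (int a - 2) u * y (u + of_nat K + 2 - of_nat a)) * f (u + of_nat (K+2) - of_nat a))
       = (\<Sum>a<Suc (Suc (K+1)). (-1)^a * (x u * c (int a - 2) u * y (u + of_nat K + 2 - of_nat a)) * f (u + of_nat (K+2) - of_nat a))" by (simp only: e3(2))
    also have "\<dots> = (\<Sum>a<K+1. (-1)^(Suc (Suc a)) * (x u * c (int a) u * y (u + of_nat K + 2 - of_nat (Suc (Suc a)))) * f (u + of_nat (K+2) - of_nat (Suc (Suc a))))"
      by (subst sum.lessThan_Suc_shift, subst sum.lessThan_Suc_shift) (simp add: cz)
    also have "\<dots> = x u * S4" unfolding S4_def sum_distrib_left
      by (rule sum.cong) (simp_all add: algebra_simps)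
    finally show ?thesis .
  qed
  have "(\<Sum>a<K+3. (-1)^a *
     (c (int a) (u+1) + x u * c (int a - 1) u + c (int a - 1) (u+1) * y (u + of_nat K + 2 - of_nat a)
      + x u * c (int a - 2) u * y (u + of_nat K + 2 - of_nat a)) * f (u + of_nat (K+2) - of_nat a))
    = (\<Sum>a<K+3. (-1)^a * c (int a) (u+1) * f (u + of_nat (K+2) - of_nat a))
      + (\<Sum>a<K+3. (-1)^a * (x u * c (int a - 1) u) * f (u + of_nat (K+2) - of_nat a))
      + (\<Sum>a<K+3. (-1)^a * (c (int a - 1) (u+1) * y (u + of_nat K + 2 - of_nat a)) * f (u + of_nat (K+2) - of_nat a))
      + (\<Sum>a<K+3. (-1)^a * (x u * c (int a - 2) u * y (u + of_nat K + 2 - of_nat a)) * f (u + of_nat (K+2) - of_nat a))"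
    by (simp add: sum.distrib[symmetric] algebra_simps)
  also have "\<dots> = S1 - x u * S2 - S3 + x u * S4" using R1 R2 R3 R4 by simp
  finally have Z: "(\<Sum>a<K+3. (-1)^a *
     (c (int a) (u+1) + x u * c (int a - 1) u + c (int a - 1) (u+1) * y (u + of_nat K + 2 - of_nat a)
      + x u * c (int a - 2) u * y (u + of_nat K + 2 - of_nat a)) * f (u + of_nat (K+2) - of_nat a))
     = S1 - x u * S2 - S3 + x u * S4" .
  have "Lf x (P (Lf y f)) u = S1 - x u * S2 - S3 + x u * S4" using L by (simp add: algebra_simps)
  then show ?thesis using Z by (rule trans[OF _ sym])
qed


lemma gz_1: "gz (Suc m) Ys 1 v = Ys 1 (v + 1/2) / Ys 0 (v + 1)"
  unfolding gz_def by simp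

lemma gz_last: "gz (Suc m) Ys (2 * Suc m) v = Ys 0 (v + of_nat m + 2) / Ys 1 (v + of_nat m + 5/2)"
  apply (simp add: gz_def)
  apply (rule div_cong2)
  by (simp_all add: field_simps)

lemma gC_rec:
  fixes Ys :: "nat \<Rightarrow> complex \<Rightarrow> 'a::field"
  assumes nz: "\<And>b v. b \<le> Suc m \<Longrightarrow> Ys b v \<noteq> 0"
  shows "gC (Suc m) Ys (int a) u = gC m (shY Ys) (int a) (u+1)
     + gz (Suc m) Ys 1 (u + of_nat (Suc m)) * gC m (shY Ys) (int a - 1) u
     + gC m (shY Ys) (int a - 1) (u+1) * gz (Suc m) Ys (2 * Suc m) (u + of_nat (Suc m) + 1 - of_nat a)
     + gz (Suc m) Ys 1 (u + of_nat (Suc m)) * gC m (shY Ys) (int a - 2) u * gz (Suc m) Ys (2 * Suc m) (u + of_nat (Suc m) + 1 - of_nat a)"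
proof -
  let ?Y = "shY Ys"
  consider "a \<le> Suc m" | "a = m + 2" | "a \<ge> m + 3" by linarith
  then show ?thesis
  proof cases
    case 1
    then show ?thesis using gA_decomp[where Ys=Ys and m=m and u=u and a=a] by (simp add: gC_low)
  next
    case 2
    have l: "gC (Suc m) Ys (int a) u = 0" using 2 by (simp add: gC_low gA_vanish)
    have r1: "gC m ?Y (int a - 1) v = 0" for v using 2 by (simp add: gC_low gA_vanish)
    have r2: "gC m ?Y (int a - 2) u = gA m ?Y (int m) u" using 2 by (simp add: gC_low)
    have r3: "gC m ?Y (int a) (u+1) = - (Ys 1 (u + of_nat m + 3/2) / Ys 1 (u + of_nat m + 5/2)) * gA m ?Y (int m) u"
    proof -
      have "gC m ?Y (int a) (u+1) = - (?Y 0 (u + 1 + of_int (int m)) / ?Y 0 (u + 1 + of_nat m + 1))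
          * gA m ?Y (int m) (u + 1 + of_int (int m) - of_nat m - 1)"
        using 2 unfolding gC_def by simp
      also have "\<dots> = - (Ys 1 (u + of_nat m + 3/2) / Ys 1 (u + of_nat m + 5/2)) * gA m ?Y (int m) u"
        unfolding shY_def by (simp add: algebra_simps)
      finally show ?thesis .
    qed
    have x: "gz (Suc m) Ys 1 (u + of_nat (Suc m)) = Ys 1 (u + of_nat m + 3/2) / Ys 0 (u + of_nat m + 2)"
      unfolding gz_1 by (simp add: algebra_simps)
    have zb: "gz (Suc m) Ys (2 * Suc m) (u + of_nat (Suc m) + 1 - of_nat a) = Ys 0 (u + of_nat m + 2) / Ys 1 (u + of_nat m + 5/2)"
      unfolding gz_last using 2 by (simp add: algebra_simps)
    have n1: "Ys 1 (u + of_nat m + 5/2) \<noteq> 0" "Ys 0 (u + of_nat m + 2) \<noteq> 0" using nz by auto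
    show ?thesis unfolding l r1 r2 r3 x zb using n1 by (simp add: field_simps)
  next
    case 3
    define b where "b = 2 * int m + 4 - int a"
    have bM: "b \<le> int m + 1" unfolding b_def using 3 by simp
    define u' where "u' = u + of_int b - of_nat m - 2"
    define G0 where "G0 = gA m ?Y b (u + of_int b - of_nat m - 1)"
    define G1 where "G1 = gA m ?Y (b-1) (u + of_int b - of_nat m - 2)"
    define G2 where "G2 = gA m ?Y (b-1) (u + of_int b - of_nat m - 1)"
    define G3 where "G3 = gA m ?Y (b-2) (u + of_int b - of_nat m - 2)"
    define P0 where "P0 = Ys 0 (u + of_int b)"
    define P1 where "P1 = Ys 0 (u + of_nat m + 2)"
    define Q1 where "Q1 = Ys 1 (u + of_int b - 1/2)"
    define Q2 where "Q2 = Ys 1 (u + of_int b + 1/2)"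
    define Q3 where "Q3 = Ys 1 (u + of_nat m + 3/2)"
    define Q4 where "Q4 = Ys 1 (u + of_nat m + 5/2)"
    have nzs: "P0 \<noteq> 0" "P1 \<noteq> 0" "Q1 \<noteq> 0" "Q2 \<noteq> 0" "Q3 \<noteq> 0" "Q4 \<noteq> 0"
      unfolding P0_def P1_def Q1_def Q2_def Q3_def Q4_def using nz by auto
    have ngt: "\<not> int a \<le> int m" "\<not> int a - 1 \<le> int m" "\<not> int a - 2 \<le> int m"
      "\<not> int a \<le> int (Suc m)" using 3 by auto
    have idx: "2 * int m + 2 - int a = b - 2" "2 * int m + 2 - (int a - 1) = b - 1"
      "2 * int m + 2 - (int a - 2) = b" "2 * int (Suc m) + 2 - int a = b" unfolding b_def by auto
    have l0: "gC (Suc m) Ys (int a) u = - (P0 / P1) * gA (Suc m) Ys b (u + of_int b - of_nat m - 2)"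
    proof -
      have "gC (Suc m) Ys (int a) u = - (Ys 0 (u + of_int b) / Ys 0 (u + of_nat (Suc m) + 1))
        * gA (Suc m) Ys b (u + of_int b - of_nat (Suc m) - 1)"
        unfolding gC_def idx(4) using ngt(4) by simp
      then show ?thesis unfolding P0_def P1_def by (simp add: algebra_simps)
    qed
    have c1: "gC m ?Y (int a) (u+1) = - (Q1/Q4) * G3"
    proof -
      have "gC m ?Y (int a) (u+1) = - (?Y 0 (u + 1 + of_int (b-2)) / ?Y 0 (u + 1 + of_nat m + 1))
        * gA m ?Y (b-2) (u + 1 + of_int (b-2) - of_nat m - 1)"
        unfolding gC_def idx(1) using ngt(1) by simp
      then show ?thesis unfolding shY_def Q1_def Q4_def G3_def by (simp add: algebra_simps)
    qed
    have c2: "gC m ?Y (int a - 1) u = - (Q1/Q3) * G1"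
    proof -
      have "gC m ?Y (int a - 1) u = - (?Y 0 (u + of_int (b-1)) / ?Y 0 (u + of_nat m + 1))
        * gA m ?Y (b-1) (u + of_int (b-1) - of_nat m - 1)"
        unfolding gC_def idx(2) using ngt(2) by simp
      then show ?thesis unfolding shY_def Q1_def Q3_def G1_def by (simp add: algebra_simps)
    qed
    have c3: "gC m ?Y (int a - 1) (u+1) = - (Q2/Q4) * G2"
    proof -
      have "gC m ?Y (int a - 1) (u+1) = - (?Y 0 (u + 1 + of_int (b-1)) / ?Y 0 (u + 1 + of_nat m + 1))
        * gA m ?Y (b-1) (u + 1 + of_int (b-1) - of_nat m - 1)"
        unfolding gC_def idx(2) using ngt(2) by simp
      then show ?thesis unfolding shY_def Q2_def Q4_def G2_def by (simp add: algebra_simps)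
    qed
    have c4: "gC m ?Y (int a - 2) u = - (Q2/Q3) * G0"
    proof -
      have "gC m ?Y (int a - 2) u = - (?Y 0 (u + of_int b) / ?Y 0 (u + of_nat m + 1))
        * gA m ?Y b (u + of_int b - of_nat m - 1)"
        unfolding gC_def idx(3) using ngt(3) by simp
      then show ?thesis unfolding shY_def Q2_def Q3_def G0_def by (simp add: algebra_simps)
    qed
    have x: "gz (Suc m) Ys 1 (u + of_nat (Suc m)) = Q3 / P1"
      unfolding gz_1 Q3_def P1_def by (simp add: algebra_simps)
    have zb: "gz (Suc m) Ys (2 * Suc m) (u + of_nat (Suc m) + 1 - of_nat a) = P0 / Q2"
    proof -
      have hb: "of_int b = (2 * of_nat m + 4 - of_nat a :: complex)" unfolding b_def by simp
      have e: "u + of_nat (Suc m) + 1 - of_nat a = u + of_int b - of_nat m - 2" unfolding hb by (simp add: algebra_simps)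
      show ?thesis unfolding e gz_last P0_def Q2_def by (rule div_cong2) (simp_all add: algebra_simps)
    qed
    show ?thesis
    proof (cases "b < 0")
      case True
      have "G0 = 0" "G1 = 0" "G2 = 0" "G3 = 0" "gA (Suc m) Ys b (u + of_int b - of_nat m - 2) = 0"
        unfolding G0_def G1_def G2_def G3_def using True by (simp_all add: gA_neg)
      then show ?thesis unfolding l0 c1 c2 c3 c4 by simp
    next
      case False
      obtain nb where nb: "b = int nb" using False by (metis nonneg_int_cases not_less)
      have nbM: "nb \<le> Suc m" using bM nb by simp
      have L1: "gA (Suc m) Ys b (u + of_int b - of_nat m - 2) = G0 + (Q1/P0) * G1 + G2 * (P1/Q4) + (Q1/P0) * G3 * (P1/Q4)"
      proof -
        have "gA (Suc m) Ys (int nb) u' = gA m ?Y (int nb) (u'+1) + gz (Suc m) Ys 1 (u' + of_nat (Suc m)) * gA m ?Y (int nb - 1) u'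
          + gA m ?Y (int nb - 1) (u'+1) * gz (Suc m) Ys (2 * Suc m) (u' + of_nat (Suc m) + 1 - of_nat nb)
          + gz (Suc m) Ys 1 (u' + of_nat (Suc m)) * gA m ?Y (int nb - 2) u' * gz (Suc m) Ys (2 * Suc m) (u' + of_nat (Suc m) + 1 - of_nat nb)"
          using gA_decomp[where Ys=Ys and m=m and u=u' and a=nb] nbM by simp
        moreover have "gz (Suc m) Ys 1 (u' + of_nat (Suc m)) = Q1/P0"
          unfolding gz_1 Q1_def P0_def u'_def by (simp add: algebra_simps)
        moreover have "gz (Suc m) Ys (2 * Suc m) (u' + of_nat (Suc m) + 1 - of_nat nb) = P1/Q4"
          unfolding gz_last P1_def Q4_def u'_def using nb by (simp add: algebra_simps)
        moreover have "gA m ?Y (int nb) (u'+1) = G0" "gA m ?Y (int nb - 1) u' = G1"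
          "gA m ?Y (int nb - 1) (u'+1) = G2" "gA m ?Y (int nb - 2) u' = G3"
          unfolding G0_def G1_def G2_def G3_def u'_def using nb by (simp_all add: algebra_simps)
        ultimately show ?thesis unfolding u'_def using nb by simp
      qed
      show ?thesis unfolding l0 L1 c1 c2 c3 c4 x zb using nzs by (simp add: field_simps)
    qed
  qed
qed

lemma gP_coef:
  fixes Ys :: "nat \<Rightarrow> complex \<Rightarrow> 'a::field"
  assumes nz: "\<And>b v. b \<le> m \<Longrightarrow> Ys b v \<noteq> 0"
  shows "gP m Ys f u = (\<Sum>a<2*m+3. (-1)^a * gC m Ys (int a) u * f (u + of_nat (2*m+2) - of_nat a))"
  using nz
proof (induction m arbitrary: Ys f u)
  case 0
  have c0: "gC 0 Ys 0 u = 1" by (simp add: gC_def gA_zero)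
  have c1: "gC 0 Ys 1 u = 0" by (simp add: gC_def gA_vanish)
  have c2: "gC 0 Ys 2 u = - (Ys 0 u / Ys 0 (u+1))" by (simp add: gC_def gA_zero)
  have "(\<Sum>a<2*0+3. (-1)^a * gC 0 Ys (int a) u * f (u + of_nat (2*0+2) - of_nat a))
      = gC 0 Ys 0 u * f (u+2) - gC 0 Ys 1 u * f (u+1) + gC 0 Ys 2 u * f u"
    using c1 by (simp add: eval_nat_numeral)
  then show ?case using c0 c1 c2 by simp
next
  case (Suc m)
  let ?Y = "shY Ys"
  let ?x = "\<lambda>v. gz (Suc m) Ys 1 (v + of_nat (Suc m))"
  let ?y = "\<lambda>v. gz (Suc m) Ys (2 * Suc m) (v - of_nat (Suc m) - 1)"
  have IH: "\<And>g v. gP m ?Y g v = (\<Sum>a<(2*m+2)+1. (-1)^a * gC m ?Y (int a) v * g (v + of_nat (2*m+2) - of_nat a))"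
  proof -
    fix g v
    have "\<And>b v. b \<le> m \<Longrightarrow> ?Y b v \<noteq> 0" unfolding shY_def using Suc.prems by simp
    then have "gP m ?Y g v = (\<Sum>a<2*m+3. (-1)^a * gC m ?Y (int a) v * g (v + of_nat (2*m+2) - of_nat a))"
      by (rule Suc.IH)
    moreover have e: "(2*m+2)+1 = 2*m+3" by simp
    ultimately show "gP m ?Y g v = (\<Sum>a<(2*m+2)+1. (-1)^a * gC m ?Y (int a) v * g (v + of_nat (2*m+2) - of_nat a))"
      by (simp only: e)
  qed
  have cz: "\<And>a v. a < 0 \<or> a > int (2*m+2) \<Longrightarrow> gC m ?Y a v = 0" by (rule gC_out) arith
  have "gP (Suc m) Ys f u = Lf ?x (gP m ?Y (Lf ?y f)) u" by simp
  also have "\<dots> = (\<Sum>a<(2*m+2)+3. (-1)^a *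
     (gC m ?Y (int a) (u+1) + ?x u * gC m ?Y (int a - 1) u + gC m ?Y (int a - 1) (u+1) * ?y (u + of_nat (2*m+2) + 2 - of_nat a)
      + ?x u * gC m ?Y (int a - 2) u * ?y (u + of_nat (2*m+2) + 2 - of_nat a)) * f (u + of_nat ((2*m+2)+2) - of_nat a))"
    by (rule comp_lemma[OF IH cz])
  also have "\<dots> = (\<Sum>a<2*Suc m+3. (-1)^a * gC (Suc m) Ys (int a) u * f (u + of_nat (2*Suc m+2) - of_nat a))"
  proof (rule sum.cong)
    show "{..<(2*m+2)+3} = {..<2*Suc m+3}" by simp
  next
    fix a assume "a \<in> {..<2*Suc m+3}"
    have ey: "?y (u + of_nat (2*m+2) + 2 - of_nat a) = gz (Suc m) Ys (2 * Suc m) (u + of_nat (Suc m) + 1 - of_nat a)"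
      by (rule arg_cong[where f="gz (Suc m) Ys (2 * Suc m)"]) (simp add: algebra_simps)
    have ef: "u + of_nat ((2*m+2)+2) - of_nat a = u + of_nat (2*Suc m+2) - (of_nat a :: complex)" by simp
    show "(-1)^a *
     (gC m ?Y (int a) (u+1) + ?x u * gC m ?Y (int a - 1) u + gC m ?Y (int a - 1) (u+1) * ?y (u + of_nat (2*m+2) + 2 - of_nat a)
      + ?x u * gC m ?Y (int a - 2) u * ?y (u + of_nat (2*m+2) + 2 - of_nat a)) * f (u + of_nat ((2*m+2)+2) - of_nat a)
      = (-1)^a * gC (Suc m) Ys (int a) u * f (u + of_nat (2*Suc m+2) - of_nat a)"
    proof -
      have G: "gC (Suc m) Ys (int a) u = gC m ?Y (int a) (u+1) + ?x u * gC m ?Y (int a - 1) u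
        + gC m ?Y (int a - 1) (u+1) * ?y (u + of_nat (2*m+2) + 2 - of_nat a)
        + ?x u * gC m ?Y (int a - 2) u * ?y (u + of_nat (2*m+2) + 2 - of_nat a)"
        unfolding ey by (rule gC_rec[OF Suc.prems])
      show ?thesis unfolding ef G by (rule refl)
    qed
  qed
  finally show ?case .
qed

lemma Q_nz:
  assumes indep: "alg_indep_Q n Q" and a: "1 \<le> a" "a \<le> n"
  shows "Q a u \<noteq> 0"
proof
  assume Q0: "Q a u = 0"
  define ev :: "nat \<times> complex \<Rightarrow> nat" where "ev = (\<lambda>x. if x = (a,u) then 1 else 0)"
  define c :: "(nat \<times> complex \<Rightarrow> nat) \<Rightarrow> int" where "c = (\<lambda>e. if e = ev then 1 else 0)"
  have s1: "{e. c e \<noteq> 0} = {ev}" unfolding c_def by auto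
  have s2: "{x. ev x \<noteq> 0} = {(a,u)}" unfolding ev_def by auto
  have sm: "(\<Sum>e\<in>{e. c e \<noteq> 0}. of_int (c e) * (\<Prod>x\<in>{x. e x \<noteq> 0}. Q (fst x) (snd x) ^ e x)) = 0"
    unfolding s1 s2 using Q0 by (simp add: c_def ev_def)
  have cond: "\<forall>e. c e \<noteq> 0 \<longrightarrow> finite {x. e x \<noteq> 0} \<and> {x. e x \<noteq> 0} \<subseteq> {1..n} \<times> UNIV"
  proof (intro allI impI)
    fix e assume "c e \<noteq> 0"
    then have "e = ev" unfolding c_def by (auto split: if_splits)
    then show "finite {x. e x \<noteq> 0} \<and> {x. e x \<noteq> 0} \<subseteq> {1..n} \<times> UNIV" using s2 a by auto
  qed
  have fin: "finite {e. c e \<noteq> 0}" unfolding s1 by simp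
  have H: "finite {e. c e \<noteq> 0} \<longrightarrow>
        (\<forall>e. c e \<noteq> 0 \<longrightarrow> finite {x. e x \<noteq> 0} \<and> {x. e x \<noteq> 0} \<subseteq> {1..n} \<times> UNIV) \<longrightarrow>
        (\<Sum>e\<in>{e. c e \<noteq> 0}. of_int (c e) * (\<Prod>x\<in>{x. e x \<noteq> 0}. Q (fst x) (snd x) ^ e x)) = 0 \<longrightarrow>
        (\<forall>e. c e = 0)"
    using indep unfolding alg_indep_Q_def by (rule spec)
  have "\<forall>e. c e = 0" using H fin cond sm by blast
  then show False unfolding c_def by (metis zero_neq_one)
qed

lemma Yf_nz:
  assumes indep: "alg_indep_Q n Q" and "b \<le> n"
  shows "Yf n Q b v \<noteq> 0"
  using Q_nz[OF indep] assms(2) unfolding Yf_def by auto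

definition Ysc :: "nat \<Rightarrow> (nat \<Rightarrow> complex \<Rightarrow> 'a::field) \<Rightarrow> nat \<Rightarrow> nat \<Rightarrow> complex \<Rightarrow> 'a" where
  "Ysc n Q c b v = Yf n Q (b + c - 1) (v + (of_nat c - 1) / 2)"

lemma Ysc_sh: "1 \<le> c \<Longrightarrow> shY (Ysc n Q c) = Ysc n Q (Suc c)"
  unfolding shY_def Ysc_def
  by (rule ext, rule ext, simp, rule arg_cong[where f="Yf n Q _"], simp add: field_simps)

lemma upt_split: "c < d \<Longrightarrow> [c..<Suc d] = c # [Suc c..<d] @ [d]"
  by (simp add: upt_conv_Cons)

lemma X_prod:
  assumes indep: "alg_indep_Q n Q" and n1: "1 \<le> n"
  shows "xX n Q u * xX n Q (u - 1) = Yf n Q n (u + of_nat n / 2) / Yf n Q n (u + of_nat n / 2 + 1)"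
proof -
  define q where "q t = Q n (u + of_nat n / 2 + t)" for t
  have nz: "q t \<noteq> 0" for t unfolding q_def using Q_nz[OF indep n1] by simp
  have a1: "u + (of_nat n + 4) / 2 = u + of_nat n / 2 + 2" "u + (of_nat n + 2) / 2 = u + of_nat n / 2 + 1"
    "u - 1 + of_nat n / 2 = u + of_nat n / 2 + (-1)" "u - 1 + (of_nat n + 4) / 2 = u + of_nat n / 2 + 1"
    "u - 1 + (of_nat n + 2) / 2 = u + of_nat n / 2 + 0"
    "u + of_nat n / 2 - 1 = u + of_nat n / 2 + (-1)" 
    "u + of_nat n / 2 + 1 - 1 = u + of_nat n / 2 + 0" "u + of_nat n / 2 + 1 + 1 = u + of_nat n / 2 + 2"
    by (simp_all add: field_simps)
  have Yn: "Yf n Q n v = Q n (v - 1) / Q n (v + 1)" for v unfolding Yf_def dd_def using n1 by simp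
  have q0: "q 0 = Q n (u + of_nat n / 2)" unfolding q_def by simp
  have X0: "xX n Q u = q 0 * q 2 / (q 1)^2"
    unfolding xX_def a1(1,2) q0 unfolding q_def by (rule refl)
  have X1: "xX n Q (u - 1) = q (-1) * q 1 / (q 0)^2"
    unfolding xX_def a1(3,4,5) unfolding q_def by (rule refl)
  have Y0: "Yf n Q n (u + of_nat n / 2) = q (-1) / q 1"
    unfolding Yn a1(6) unfolding q_def by (rule refl)
  have Y1: "Yf n Q n (u + of_nat n / 2 + 1) = q 0 / q 2"
    unfolding Yn a1(7,8) unfolding q_def by (rule refl)
  show ?thesis unfolding X0 X1 Y0 Y1 using nz by (simp add: field_simps power2_eq_square)
qed


lemma div_cong4: "i = i' \<Longrightarrow> j = j' \<Longrightarrow> x = x' \<Longrightarrow> y = y' \<Longrightarrow> (F::nat \<Rightarrow> complex \<Rightarrow> 'a::field) i x / F j y = F i' x' / F j' y'"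
  by simp

lemma Lop_aux:
  fixes Q :: "nat \<Rightarrow> complex \<Rightarrow> 'a::field"
  assumes indep: "alg_indep_Q n Q" and n1: "1 \<le> n"
  shows "m \<le> n \<Longrightarrow> foldr (Lfactor n Q) [n+1-m..<n+3+m] f u = gP m (Ysc n Q (n+1-m)) f u"
proof (induction m arbitrary: f u)
  case 0
  have l: "[n+1-0..<n+3+0] = [n+1, n+2]" by (simp add: numeral_3_eq_3 upt_rec)
  have y: "Ysc n Q (Suc n) 0 v = Yf n Q n (v + of_nat n / 2)" for v
    unfolding Ysc_def by simp
  have e1: "u + 1 + of_nat n / 2 = u + of_nat n / 2 + 1" by simp
  show ?case unfolding l
    using X_prod[OF indep n1, of u]
    by (simp add: Lfactor_def xf_def e1 y algebra_simps)
next
  case (Suc m)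
  have mn: "m \<le> n" "m < n" using Suc.prems by auto
  have l: "[n+1-Suc m..<n+3+Suc m] = (n-m) # [n+1-m..<n+3+m] @ [n+3+m]"
  proof -
    have "[n+1-Suc m..<n+3+Suc m] = [n-m..<Suc (n+3+m)]" by simp
    also have "\<dots> = (n-m) # [Suc (n-m)..<n+3+m] @ [n+3+m]" by (rule upt_split) simp
    also have "Suc (n-m) = n+1-m" using mn by simp
    finally show ?thesis .
  qed
  have sh: "shY (Ysc n Q (n+1-Suc m)) = Ysc n Q (n+1-m)"
    using Ysc_sh[of "n-m" n Q] mn by (simp add: Suc_diff_le)
  have A: "xf n Q (n-m) (v + of_int (int n + 1 - int (n-m))) = gz (Suc m) (Ysc n Q (n+1-Suc m)) 1 (v + of_nat (Suc m))" for v
  proof -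
    have "xf n Q (n-m) (v + of_int (int n + 1 - int (n-m))) = zU n Q (n-m) (v + of_int (int n + 1 - int (n-m)))"
      unfolding xf_def by simp
    also have "\<dots> = gz (Suc m) (Ysc n Q (n+1-Suc m)) 1 (v + of_nat (Suc m))"
      unfolding zU_def gz_1 Ysc_def using mn
      by (intro div_cong4) (simp_all add: of_nat_diff field_simps)
    finally show ?thesis .
  qed
  have B: "xf n Q (n+3+m) (v + of_int (int n + 1 - int (n+3+m))) = gz (Suc m) (Ysc n Q (n+1-Suc m)) (2 * Suc m) (v - of_nat (Suc m) - 1)" for v
  proof -
    have "xf n Q (n+3+m) (v + of_int (int n + 1 - int (n+3+m))) = zB n Q (n-m) (v + of_int (int n + 1 - int (n+3+m)))"
      unfolding xf_def by simp
    also have "\<dots> = gz (Suc m) (Ysc n Q (n+1-Suc m)) (2 * Suc m) (v - of_nat (Suc m) - 1)"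
      unfolding zB_def gz_last Ysc_def using mn
      by (intro div_cong4) (simp_all add: of_nat_diff field_simps)
    finally show ?thesis .
  qed
  have Lb: "Lfactor n Q (n+3+m) f = Lf (\<lambda>v. gz (Suc m) (Ysc n Q (n+1-Suc m)) (2 * Suc m) (v - of_nat (Suc m) - 1)) f"
    by (rule ext) (unfold Lfactor_def Lf_def B, rule refl)
  have "foldr (Lfactor n Q) [n+1-Suc m..<n+3+Suc m] f u
      = Lfactor n Q (n-m) (foldr (Lfactor n Q) [n+1-m..<n+3+m] (Lfactor n Q (n+3+m) f)) u"
    unfolding l by simp
  also have "\<dots> = Lfactor n Q (n-m) (gP m (Ysc n Q (n+1-m)) (Lfactor n Q (n+3+m) f)) u"
  proof -
    have "foldr (Lfactor n Q) [n+1-m..<n+3+m] (Lfactor n Q (n+3+m) f) = gP m (Ysc n Q (n+1-m)) (Lfactor n Q (n+3+m) f)"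
      by (rule ext) (rule Suc.IH[OF mn(1)])
    then show ?thesis by simp
  qed
  also have "\<dots> = gP (Suc m) (Ysc n Q (n+1-Suc m)) f u"
    unfolding gP.simps sh Lb unfolding Lfactor_def Lf_def A by (rule refl)
  finally show ?case .
qed

lemma Lop_gP:
  fixes Q :: "nat \<Rightarrow> complex \<Rightarrow> 'a::field"
  assumes indep: "alg_indep_Q n Q" and n1: "1 \<le> n"
  shows "Lop n Q f u = gP n (Yf n Q) f u"
proof -
  have "Lop n Q f u = foldr (Lfactor n Q) [n+1-n..<n+3+n] f u"
    unfolding Lop_def by (simp add: add.commute)
  also have "\<dots> = gP n (Ysc n Q (n+1-n)) f u" by (rule Lop_aux[OF indep n1]) simp
  also have "Ysc n Q (n+1-n) = Yf n Q" unfolding Ysc_def by (rule ext, rule ext) simp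
  finally show ?thesis .
qed

lemma zJ_gz:
  assumes "1 \<le> p" "p \<le> 2*n"
  shows "zJ n Q p u = gz n (Yf n Q) p u"
proof (cases "p \<le> n")
  case True
  then show ?thesis unfolding zJ_def zU_def gz_def by simp
next
  case False
  then have "zJ n Q p u = zB n Q (2*n+1-p) u" unfolding zJ_def by simp
  also have "\<dots> = gz n (Yf n Q) p u"
    unfolding zB_def gz_def using False assms
    by (simp only: if_False) (intro div_cong4; simp add: of_nat_diff field_simps)
  finally show ?thesis .
qed

lemma Tbase_gA: "Tbase n Q a v = gA n (Yf n Q) (int a) (v + of_nat a / 2 - 1 - of_nat n)"
proof -
  have H: "zJ n Q (xs!k) (v - 1/2 + of_int (int a + 1 - 2 * (int k + 1)) / 2) =
        gz n (Yf n Q) (xs!k) (v + of_nat a / 2 - 1 - of_nat n + of_nat n - of_nat k)"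
    if xs: "xs \<in> admT n a" and k: "k < a" for xs k
  proof -
    have "xs!k \<in> set xs" using k admT_range[OF xs] by auto
    then have r: "1 \<le> xs!k" "xs!k \<le> 2*n" using admT_range[OF xs] by auto
    show ?thesis
      unfolding zJ_gz[OF r] by (rule arg_cong[where f="gz n (Yf n Q) (xs!k)"]) (simp add: field_simps)
  qed
  show ?thesis unfolding Tbase_def gA_def using H by (auto intro!: sum.cong prod.cong)
qed


lemma Yf0: "Yf n Q 0 v = 1" unfolding Yf_def by simp

lemma key:
  fixes Q :: "nat \<Rightarrow> complex \<Rightarrow> 'a::field"
  assumes j: "j \<le> 2*n+2"
  shows "gC n (Yf n Q) (int (2*n+2) - int j) u = - Tf n Q (int j) (u + of_nat j / 2)"
proof -
  consider "j = 2*n+2" | "n+2 \<le> j \<and> j \<le> 2*n+1" | "j = n+1" | "1 \<le> j \<and> j \<le> n" | "j = 0"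
    using j by linarith
  then show ?thesis
  proof cases
    case 1
    then show ?thesis by (simp add: Tf_def gC_low gA_zero)
  next
    case 2
    define a where "a = 2*n+2-j"
    have ia: "int (2*n+2) - int j = int a" "2 * int n + 2 - int j = int a" unfolding a_def using 2 by auto
    have a1: "1 \<le> a" "a \<le> n" unfolding a_def using 2 by auto
    have "Tf n Q (int j) (u + of_nat j / 2) = - Tbase n Q a (u + of_nat j / 2)"
      unfolding Tf_def using 2 ia by simp
    also have "\<dots> = - gA n (Yf n Q) (int a) (u + of_nat j / 2 + of_nat a / 2 - 1 - of_nat n)"
      by (simp add: Tbase_gA)
    also have "u + of_nat j / 2 + of_nat a / 2 - 1 - of_nat n = u"
    proof -
      have "of_nat a = (2 * of_nat n + 2 - of_nat j :: complex)" unfolding a_def using 2 by (simp add: of_nat_diff)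
      then show ?thesis by (simp add: field_simps)
    qed
    finally show ?thesis unfolding ia using a1 by (simp add: gC_low)
  next
    case 3
    then show ?thesis by (simp add: Tf_def gC_low gA_vanish)
  next
    case 4
    have ng: "\<not> int (2*n+2) - int j \<le> int n" "2 * int n + 2 - (int (2*n+2) - int j) = int j" using 4 by auto
    have "gC n (Yf n Q) (int (2*n+2) - int j) u = - gA n (Yf n Q) (int j) (u + of_int (int j) - of_nat n - 1)"
      unfolding gC_def ng(2) using ng(1) by (simp add: Yf0)
    moreover have "Tf n Q (int j) (u + of_nat j / 2) = gA n (Yf n Q) (int j) (u + of_int (int j) - of_nat n - 1)"
    proof -
      have "Tf n Q (int j) (u + of_nat j / 2) = Tbase n Q j (u + of_nat j / 2)"
        unfolding Tf_def using 4 by simp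
      also have "\<dots> = gA n (Yf n Q) (int j) (u + of_nat j / 2 + of_nat j / 2 - 1 - of_nat n)"
        by (rule Tbase_gA)
      also have "u + of_nat j / 2 + of_nat j / 2 - 1 - of_nat n = u + of_int (int j) - of_nat n - (1::complex)"
        by (simp add: field_simps)
      finally show ?thesis .
    qed
    ultimately show ?thesis by simp
  next
    case 5
    have ng: "\<not> int (2*n+2) - int j \<le> int n" "2 * int n + 2 - (int (2*n+2) - int j) = 0" using 5 by auto
    have "gC n (Yf n Q) (int (2*n+2) - int j) u = - 1"
      unfolding gC_def ng(2) using ng(1) by (simp add: Yf0 gA_zero)
    then show ?thesis using 5 by (simp add: Tf_def)
  qed
qed

lemma Lop_coef:
  fixes Q :: "nat \<Rightarrow> complex \<Rightarrow> 'a::field"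
  assumes indep: "alg_indep_Q n Q" and n1: "1 \<le> n"
  shows "Lop n Q f u = (\<Sum>a<2*n+3. (-1)^a * gC n (Yf n Q) (int a) u * f (u + of_nat (2*n+2) - of_nat a))"
  unfolding Lop_gP[OF indep n1] by (rule gP_coef) (rule Yf_nz[OF indep])

lemma neg1_pow_diff: "even N \<Longrightarrow> j \<le> N \<Longrightarrow> (-1::'a::ring_1)^(N-j) = (-1)^j"
proof -
  assume e: "even N" and j: "j \<le> N"
  have "even (N - j) = even j" using e j by (simp add: even_diff_nat)
  then show ?thesis by (cases "even j") (simp_all)
qed

lemma Lop_rec:
  fixes Q :: "nat \<Rightarrow> complex \<Rightarrow> 'a::field"
  assumes indep: "alg_indep_Q n Q" and n1: "1 \<le> n" and L0: "Lop n Q g u = 0"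
  shows "g (u + of_nat (2*n+2)) = (\<Sum>j<2*n+2. (-1)^j * Tf n Q (int j) (u + of_nat j / 2) * g (u + of_nat j))"
proof -
  let ?N = "2*n+2"
  define G where "G a = (-1)^a * gC n (Yf n Q) (int a) u * g (u + of_nat ?N - of_nat a)" for a
  have e: "2*n+2+1 = 2*n+3" by simp
  have "0 = (\<Sum>a<?N+1. G a)" using L0 unfolding Lop_coef[OF indep n1] G_def e by simp
  also have "\<dots> = (\<Sum>j<?N+1. G (?N + 1 - Suc j))" by (rule sum.nat_diff_reindex[symmetric])
  also have "\<dots> = (\<Sum>j<?N+1. - ((-1)^j * Tf n Q (int j) (u + of_nat j / 2) * g (u + of_nat j)))"
  proof (rule sum.cong[OF refl])
    fix j assume "j \<in> {..<?N+1}"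
    then have j: "j \<le> ?N" by simp
    have e1: "?N + 1 - Suc j = ?N - j" by simp
    have e2: "int (?N - j) = int ?N - int j" using j by simp
    have e3: "u + of_nat ?N - of_nat (?N - j) = u + (of_nat j :: complex)" using j by (simp add: of_nat_diff)
    have e4: "(-1::'a)^(?N - j) = (-1)^j" by (rule neg1_pow_diff) (use j in auto)
    show "G (?N + 1 - Suc j) = - ((-1)^j * Tf n Q (int j) (u + of_nat j / 2) * g (u + of_nat j))"
      unfolding G_def e1 e2 e3 e4 key[OF j] by simp
  qed
  also have "\<dots> = - ((-1)^?N * Tf n Q (int ?N) (u + of_nat ?N / 2) * g (u + of_nat ?N))
      - (\<Sum>j<?N. (-1)^j * Tf n Q (int j) (u + of_nat j / 2) * g (u + of_nat j))"
    by (simp add: sum_negf)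
  also have "(-1::'a)^?N * Tf n Q (int ?N) (u + of_nat ?N / 2) = -1"
    by (simp add: Tf_def)
  finally show ?thesis by (simp add: algebra_simps)
qed

lemma H_small:
  "k \<le> 2*n+1 \<Longrightarrow> Hf n Q i k v = (-1)^i * (if i = k then 1 else 0)"
proof (induction k arbitrary: i v)
  case 0
  then show ?case by simp
next
  case (Suc k)
  have h: "Hf n Q (2*n+1) k x = 0" for x using Suc.IH[of "2*n+1" x] Suc.prems by simp
  show ?case
  proof (cases i)
    case 0
    then show ?thesis using h by simp
  next
    case (Suc i')
    then show ?thesis using h Suc.IH[of i'] Suc.prems by simp
  qed
qed

lemma w_rec:
  fixes Q :: "nat \<Rightarrow> complex \<Rightarrow> 'a::field" and w :: "complex \<Rightarrow> 'a"
  assumes indep: "alg_indep_Q n Q" and n1: "1 \<le> n" and L0: "\<And>u. Lop n Q w u = 0"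
  shows "w (u + of_nat k) = (\<Sum>i<2*n+2. (-1)^i * Hf n Q i k (u + of_nat i / 2) * w (u + of_nat i))"
proof (induction k arbitrary: u)
  case 0
  have "(\<Sum>i<2*n+2. (-1)^i * Hf n Q i 0 (u + of_nat i / 2) * w (u + of_nat i)) = (\<Sum>i<2*n+2. if i = 0 then w u else 0)"
    by (rule sum.cong) auto
  also have "\<dots> = w u" by (simp add: sum.delta)
  finally show ?case by simp
next
  case (Suc k)
  let ?N = "2*n+1"
  define h where "h = Hf n Q ?N k (u + 1 + of_nat ?N / 2)"
  define S where "S = (\<Sum>j<2*n+2. (-1)^j * Tf n Q (int j) (u + of_nat j / 2) * w (u + of_nat j))"
  have wN: "w (u + 1 + of_nat ?N) = S"
  proof -
    have e: "u + 1 + of_nat ?N = u + (of_nat (2*n+2) :: complex)" by simp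
    show ?thesis unfolding e S_def by (rule Lop_rec[OF indep n1 L0])
  qed
  have "w (u + of_nat (Suc k)) = w ((u+1) + of_nat k)" by (simp add: add_ac)
  also have "\<dots> = (\<Sum>i<Suc ?N. (-1)^i * Hf n Q i k (u + 1 + of_nat i / 2) * w (u + 1 + of_nat i))"
    using Suc.IH[of "u+1"] by simp
  also have "\<dots> = (\<Sum>i<?N. (-1)^i * Hf n Q i k (u + 1 + of_nat i / 2) * w (u + 1 + of_nat i))
      + (-1)^?N * Hf n Q ?N k (u + 1 + of_nat ?N / 2) * w (u + 1 + of_nat ?N)"
    by (rule sum.lessThan_Suc)
  also have "\<dots> = (\<Sum>i<?N. (-1)^i * Hf n Q i k (u + 1 + of_nat i / 2) * w (u + 1 + of_nat i)) - h * S"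
    unfolding wN h_def[symmetric] by simp
  also have "\<dots> = (\<Sum>i<Suc ?N. (-1)^i * Hf n Q i (Suc k) (u + of_nat i / 2) * w (u + of_nat i))"
  proof -
    have H: "Hf n Q i (Suc k) (u + of_nat i / 2) = - Tf n Q (int i) (u + of_nat i / 2) * h
        - (if i = 0 then 0 else Hf n Q (i - 1) k (u + 1 + of_nat (i - 1) / 2))" for i
    proof -
      have a1: "u + of_nat i / 2 + (of_nat (2 * n + 3) - of_nat i) / 2 = u + 1 + of_nat ?N / (2::complex)"
        by (simp add: field_simps)
      have a2: "i \<noteq> 0 \<Longrightarrow> u + of_nat i / 2 + 1 / 2 = u + 1 + of_nat (i - 1) / (2::complex)"
        by (simp add: of_nat_diff field_simps)
      show ?thesis
      proof (cases "i = 0")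
        case True
        show ?thesis unfolding Hf.simps(2) a1 h_def using True by simp
      next
        case False
        show ?thesis unfolding Hf.simps(2) a1 a2[OF False] h_def using False by simp
      qed
    qed
    have "(\<Sum>i<Suc ?N. (-1)^i * Hf n Q i (Suc k) (u + of_nat i / 2) * w (u + of_nat i))
       = (\<Sum>i<Suc ?N. - (h * ((-1)^i * Tf n Q (int i) (u + of_nat i / 2) * w (u + of_nat i))))
         - (\<Sum>i<Suc ?N. (-1)^i * (if i = 0 then 0 else Hf n Q (i - 1) k (u + 1 + of_nat (i - 1) / 2)) * w (u + of_nat i))"
      unfolding H sum_subtractf[symmetric] by (rule sum.cong) (simp_all add: algebra_simps)
    also have "(\<Sum>i<Suc ?N. - (h * ((-1)^i * Tf n Q (int i) (u + of_nat i / 2) * w (u + of_nat i)))) = - (h * S)"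
      unfolding S_def sum_negf sum_distrib_left by simp
    also have "(\<Sum>i<Suc ?N. (-1)^i * (if i = 0 then 0 else Hf n Q (i - 1) k (u + 1 + of_nat (i - 1) / 2)) * w (u + of_nat i))
       = - (\<Sum>i<?N. (-1)^i * Hf n Q i k (u + 1 + of_nat i / 2) * w (u + 1 + of_nat i))"
      unfolding sum.lessThan_Suc_shift sum_negf[symmetric] by (simp add: add_ac)
    finally show ?thesis by simp
  qed
  finally show ?case by simp
qed


lemma det_lastcol_lin:
  fixes A :: "'a::comm_ring_1 mat"
  assumes A: "A \<in> carrier_mat N N" and N: "0 < N" and fin: "finite J"
    and col: "\<And>r. r < N \<Longrightarrow> A $$ (r, N-1) = (\<Sum>j\<in>J. c j * v j r)"
  shows "det A = (\<Sum>j\<in>J. c j * det (mat N N (\<lambda>(r,s). if s = N-1 then v j r else A $$ (r,s))))"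
proof -
  define B where "B j = mat N N (\<lambda>(r,s). if s = N-1 then v j r else A $$ (r,s))" for j
  have Bc: "B j \<in> carrier_mat N N" for j unfolding B_def by simp
  have cof: "cofactor (B j) r (N-1) = cofactor A r (N-1)" for j r
  proof -
    have "mat_delete (B j) r (N-1) = mat_delete A r (N-1)"
      by (rule eq_matI) (use A in \<open>auto simp: mat_delete_def B_def\<close>)
    then show ?thesis unfolding cofactor_def by simp
  qed
  have dB: "det (B j) = (\<Sum>r<N. v j r * cofactor A r (N-1))" for j
  proof -
    have "det (B j) = (\<Sum>r<N. B j $$ (r, N-1) * cofactor (B j) r (N-1))"
      by (rule laplace_expansion_column[OF Bc]) (use N in simp)
    also have "\<dots> = (\<Sum>r<N. v j r * cofactor A r (N-1))"
    proof (rule sum.cong[OF refl])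
      fix r assume "r \<in> {..<N}"
      then have "B j $$ (r, N-1) = v j r" unfolding B_def using N by simp
      then show "B j $$ (r, N-1) * cofactor (B j) r (N-1) = v j r * cofactor A r (N-1)" by (simp only: cof)
    qed
    finally show ?thesis .
  qed
  have "det A = (\<Sum>r<N. A $$ (r, N-1) * cofactor A r (N-1))"
    by (rule laplace_expansion_column[OF A]) (use N in simp)
  also have "\<dots> = (\<Sum>r<N. (\<Sum>j\<in>J. c j * v j r) * cofactor A r (N-1))"
  proof (rule sum.cong[OF refl])
    fix r assume "r \<in> {..<N}"
    then show "A $$ (r, N-1) * cofactor A r (N-1) = (\<Sum>j\<in>J. c j * v j r) * cofactor A r (N-1)"
      using col[of r] by simp
  qed
  also have "\<dots> = (\<Sum>j\<in>J. c j * (\<Sum>r<N. v j r * cofactor A r (N-1)))"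
    by (simp add: sum_distrib_right sum_distrib_left mult.assoc sum.swap[of _ J])
  also have "\<dots> = (\<Sum>j\<in>J. c j * det (B j))" by (simp add: dB)
  finally show ?thesis unfolding B_def .
qed


lemma cas_main:
  fixes w :: "nat \<Rightarrow> complex \<Rightarrow> 'a::field" and h :: "nat \<Rightarrow> 'a"
  assumes i: "i \<le> 2*n+1"
    and rec: "\<And>r. 1 \<le> r \<Longrightarrow> r \<le> 2*n+2 \<Longrightarrow> w r (u + of_nat k) = (\<Sum>j<2*n+2. (-1)^j * h j * w r (u + of_nat j))"
  shows "casorati w ([0..int i - 1] @ [int i + 1..int (2*n+1)] @ [int k]) u = - h i * casorati w [0..int (2*n+1)] u"
proof -
  define N where "N = 2*n+2"
  define L where "L = [0..int i - 1] @ [int i + 1..int (2*n+1)] @ [int k]"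
  have lenL: "length L = N" unfolding L_def N_def using i by simp
  have nthL: "L!s = (if s < i then int s else if s < N - 1 then int s + 1 else int k)" if s: "s < N" for s
  proof -
    have l1: "length [0..int i - 1] = i" by simp
    have l2: "length [int i + 1..int (2*n+1)] = 2*n+1-i" using i by simp
    show ?thesis
    proof (cases "s < i")
      case True
      then show ?thesis unfolding L_def by (simp add: nth_append nth_upto)
    next
      case False
      show ?thesis
      proof (cases "s < N - 1")
        case True
        then have "s - i < 2*n+1-i" using False unfolding N_def by simp
        moreover have "nat (2 * int n - int i + 1) = 2*n+1-i" using i by auto
        ultimately show ?thesis unfolding L_def using False True i by (simp add: nth_append nth_upto)
      next
        case False2: False
        then have "s = N - 1" using s by simp
        moreover have "nat (2 * int n - int i + 1) = 2*n+1-i" using i by auto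
        ultimately show ?thesis unfolding L_def N_def using False i by (simp add: nth_append)
      qed
    qed
  qed
  have nthL0: "[0..int (2*n+1)] ! s = int s" if "s < N" for s using that unfolding N_def by (simp add: nth_upto)
  define A where "A = mat N N (\<lambda>(r,s). w (r+1) (u + of_int (L!s)))"
  define V where "V = mat N N (\<lambda>(r,s). w (r+1) (u + of_int ([0..int (2*n+1)] ! s)))"
  have cL: "casorati w L u = det A" unfolding casorati_def A_def lenL ..
  have lV: "length [0..int (2*n+1)] = N" unfolding N_def by (simp add: nat_add_distrib)
  have cV: "casorati w [0..int (2*n+1)] u = det V" unfolding casorati_def lV V_def ..
  have Ac: "A \<in> carrier_mat N N" unfolding A_def by simp
  have N0: "0 < N" unfolding N_def by simp
  have iN: "i \<le> N - 1" unfolding N_def using i by simp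
  have Lk: "L!(N-1) = int k" using nthL[of "N-1"] N0 iN by simp
  define B where "B j = mat N N (\<lambda>(r,s). if s = N-1 then w (Suc r) (u + of_nat j) else A $$ (r,s))" for j
  have Bc: "B j \<in> carrier_mat N N" for j unfolding B_def by simp
  have "det A = (\<Sum>j\<in>{..<N}. ((-1)^j * h j) * det (B j))"
    unfolding B_def
  proof (rule det_lastcol_lin[OF Ac N0])
    show "finite {..<N}" by simp
    fix r assume r: "r < N"
    have "A $$ (r, N-1) = w (Suc r) (u + of_nat k)" unfolding A_def using r N0 Lk by simp
    also have "\<dots> = (\<Sum>j<2*n+2. (-1)^j * h j * w (Suc r) (u + of_nat j))" using rec[of "Suc r"] r unfolding N_def by simp
    finally show "A $$ (r, N-1) = (\<Sum>j\<in>{..<N}. ((-1)^j * h j) * w (Suc r) (u + of_nat j))" unfolding N_def by simp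
  qed
  also have "\<dots> = (\<Sum>j\<in>{..<N}. if j = i then ((-1)^i * h i) * det (B i) else 0)"
  proof (rule sum.cong[OF refl])
    fix j assume j: "j \<in> {..<N}"
    show "((-1)^j * h j) * det (B j) = (if j = i then ((-1)^i * h i) * det (B i) else 0)"
    proof (cases "j = i")
      case False
      define sj where "sj = (if j < i then j else j - 1)"
      have sj: "sj < N" "sj \<noteq> N - 1" "L!sj = int j" using j False iN unfolding sj_def
        by (auto simp: nthL)
      have cc: "col (B j) sj = col (B j) (N-1)"
        by (rule eq_vecI) (use sj N0 in \<open>auto simp: B_def A_def\<close>)
      have NN: "N - 1 < N" using N0 by simp
      have "det (B j) = 0" by (rule det_identical_columns[OF Bc sj(2) sj(1) NN cc])
      then show ?thesis using False by simp
    qed simp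
  qed
  also have "\<dots> = ((-1)^i * h i) * det (B i)" using i unfolding N_def by (simp add: sum.delta)
  also have "det (B i) = (-1)^((N-1-i)*1) * det (mat N N (\<lambda>(r, s). B i $$ (r, if s < i then s else if s < i + 1 then s + (N-1-i) else s - 1)))"
    by (rule det_swap_final_cols[OF Bc]) (use i in \<open>simp add: N_def\<close>)
  also have "mat N N (\<lambda>(r, s). B i $$ (r, if s < i then s else if s < i + 1 then s + (N-1-i) else s - 1)) = V"
  proof (rule eq_matI)
    fix r s assume r: "r < dim_row V" and s: "s < dim_col V"
    then have r': "r < N" and s': "s < N" unfolding V_def by auto
    show "mat N N (\<lambda>(r, s). B i $$ (r, if s < i then s else if s < i + 1 then s + (N-1-i) else s - 1)) $$ (r, s) = V $$ (r, s)"
    proof (cases "s < i")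
      case True
      then show ?thesis using r' s' i by (simp add: V_def B_def A_def nthL nthL0 N_def)
    next
      case False
      show ?thesis
      proof (cases "s = i")
        case True
        then show ?thesis using r' s' i by (simp add: V_def B_def A_def nthL nthL0 N_def)
      next
        case False2: False
        then have is': "i < s" using False by simp
        have e: "L!(s-1) = int s" using nthL[of "s-1"] is' s' by auto
        have ne: "s - 1 \<noteq> N - 1" "\<not> s < i" "\<not> s < i + 1" "s - 1 < N" using s' is' by auto
        have "mat N N (\<lambda>(r, s). B i $$ (r, if s < i then s else if s < i + 1 then s + (N-1-i) else s - 1)) $$ (r, s)
           = B i $$ (r, s - 1)" using r' s' ne by simp
        also have "\<dots> = w (r+1) (u + of_int (int s))" unfolding B_def A_def using r' ne e by simp
        also have "\<dots> = V $$ (r, s)" unfolding V_def using r' s' nthL0 by simp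
        finally show ?thesis .
      qed
    qed
  qed (simp_all add: V_def)
  finally have "det A = ((-1)^i * h i) * ((-1)^(N-1-i) * det V)" by simp
  also have "\<dots> = ((-1)^(i + (N-1-i))) * h i * det V" by (simp add: power_add)
  also have "i + (N-1-i) = 2*n+1" unfolding N_def using i by simp
  finally have "det A = - h i * det V" by simp
  then show ?thesis using cL cV unfolding L_def by simp
qed

lemma Tf_sym:
  assumes "0 \<le> a" "a \<le> 2 * int n + 2"
  shows "Tf n Q (2 * int n + 2 - a) v = - Tf n Q a v"
  using assms unfolding Tf_def by (auto simp: nat_diff_distrib)

lemma Tf_cong: "a = a' \<Longrightarrow> v = v' \<Longrightarrow> Tf n Q a v = Tf n Q a' v'" by simp

definition ent :: "nat \<Rightarrow> (nat \<Rightarrow> complex \<Rightarrow> 'a::field) \<Rightarrow> nat \<Rightarrow> complex \<Rightarrow> nat \<Rightarrow> nat \<Rightarrow> 'a" where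
  "ent n Q i u a b = (if a = 0 then Tf n Q (int (2*n+2) - int i + int b) (u + (of_nat i + of_nat b) / 2)
     else Tf n Q (1 - int a + int b) (u + (of_nat (2*n+1) + of_nat a + of_nat b) / 2))"

definition Dm :: "nat \<Rightarrow> (nat \<Rightarrow> complex \<Rightarrow> 'a::field) \<Rightarrow> nat \<Rightarrow> nat \<Rightarrow> complex \<Rightarrow> 'a" where
  "Dm n Q i s u = det (mat s s (\<lambda>(j0, l0).
                  let j = int j0 + 1; l = int l0 + 1;
                      lam = 1 + (if j = 1 then int (2 * n + 2) - int i - 1 else 0)
                  in Tf n Q (lam - j + l) (u + of_int (int (2 * n + 2) - 2 - lam + j + l) / 2)))"

lemma Dm_ent: "Dm n Q i s u = det (mat s s (\<lambda>(a,b). ent n Q i u a b))"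
proof -
  have "(\<lambda>(j0, l0). let j = int j0 + 1; l = int l0 + 1;
                      lam = 1 + (if j = 1 then int (2 * n + 2) - int i - 1 else 0)
                  in Tf n Q (lam - j + l) (u + of_int (int (2 * n + 2) - 2 - lam + j + l) / 2))
     = (\<lambda>(a,b). ent n Q i u a b)"
  proof (rule ext, clarify)
    fix a b :: nat
    show "(let j = int a + 1; l = int b + 1;
                      lam = 1 + (if j = 1 then int (2 * n + 2) - int i - 1 else 0)
                  in Tf n Q (lam - j + l) (u + of_int (int (2 * n + 2) - 2 - lam + j + l) / 2)) = ent n Q i u a b"
      unfolding ent_def Let_def
      by (cases "a = 0") (simp_all, (rule Tf_cong; simp add: field_simps)+)
  qed
  then show ?thesis unfolding Dm_def by simp
qed


lemma Tf_neg: "a < 0 \<Longrightarrow> Tf n Q a v = 0" unfolding Tf_def by simp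
lemma Tf_big: "a > 2 * int n + 2 \<Longrightarrow> Tf n Q a v = 0" unfolding Tf_def by simp

lemma det_rec:
  fixes Q :: "nat \<Rightarrow> complex \<Rightarrow> 'a::field"
  assumes s: "1 \<le> s" and i: "i \<le> 2*n+1"
  shows "det (mat (Suc s) (Suc s) (\<lambda>(a,b). ent n Q i u a b))
    = Tf n Q (int (2*n+2) - int i) (u + of_nat i / 2) * det (mat s s (\<lambda>(a,b). ent n Q (2*n+1) (u+1) a b))
      - (if i = 0 then 0 else det (mat s s (\<lambda>(a,b). ent n Q (i-1) (u+1) a b)))"
proof -
  define M where "M = mat (Suc s) (Suc s) (\<lambda>(a,b). ent n Q i u a b)"
  have Mc: "M \<in> carrier_mat (Suc s) (Suc s)" unfolding M_def by simp
  obtain s' where s': "s = Suc s'" using s by (cases s) auto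
  have "det M = (\<Sum>r<Suc s. M $$ (r,0) * cofactor M r 0)"
    by (rule laplace_expansion_column[OF Mc]) simp
  also have "\<dots> = M $$ (0,0) * cofactor M 0 0 + M $$ (1,0) * cofactor M 1 0"
  proof -
    have z: "M $$ (Suc (Suc r), 0) = 0" if "r < s'" for r
      unfolding M_def using that s' by (simp add: ent_def Tf_neg)
    show ?thesis unfolding s' by (simp add: sum.lessThan_Suc_shift z del: sum.lessThan_Suc)
  qed
  also have "M $$ (0,0) = Tf n Q (int (2*n+2) - int i) (u + of_nat i / 2)"
    unfolding M_def by (simp add: ent_def)
  also have "M $$ (1,0) = 1" unfolding M_def using s' by (simp add: ent_def Tf_def)
  also have "cofactor M 0 0 = det (mat s s (\<lambda>(a,b). ent n Q (2*n+1) (u+1) a b))"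
  proof -
    have "mat_delete M 0 0 = mat s s (\<lambda>(a,b). ent n Q (2*n+1) (u+1) a b)"
    proof (rule eq_matI)
      fix a b assume "a < dim_row (mat s s (\<lambda>(a,b). ent n Q (2*n+1) (u+1) a b))"
        "b < dim_col (mat s s (\<lambda>(a,b). ent n Q (2*n+1) (u+1) a b))"
      then have ab: "a < s" "b < s" by auto
      show "mat_delete M 0 0 $$ (a, b) = mat s s (\<lambda>(a,b). ent n Q (2*n+1) (u+1) a b) $$ (a, b)"
        unfolding mat_delete_def M_def using ab
        by (cases "a = 0") (simp_all add: ent_def, (rule Tf_cong; simp add: field_simps)+)
    qed (simp_all add: mat_delete_def M_def)
    then show ?thesis unfolding cofactor_def by simp
  qed
  also have "cofactor M 1 0 = - (if i = 0 then 0 else det (mat s s (\<lambda>(a,b). ent n Q (i-1) (u+1) a b)))"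
  proof (cases "i = 0")
    case True
    have "det (mat_delete M 1 0) = 0"
    proof -
      have Dc: "mat_delete M 1 0 \<in> carrier_mat s s" unfolding mat_delete_def M_def by simp
      have "det (mat_delete M 1 0) = (\<Sum>b<s. mat_delete M 1 0 $$ (0,b) * cofactor (mat_delete M 1 0) 0 b)"
        by (rule laplace_expansion_row[OF Dc]) (use s in simp)
      also have "\<dots> = 0"
        by (rule sum.neutral) (use s True in \<open>auto simp: mat_delete_def M_def ent_def Tf_big\<close>)
      finally show ?thesis .
    qed
    then show ?thesis using True unfolding cofactor_def by simp
  next
    case False
    have "mat_delete M 1 0 = mat s s (\<lambda>(a,b). ent n Q (i-1) (u+1) a b)"
    proof (rule eq_matI)
      fix a b assume "a < dim_row (mat s s (\<lambda>(a,b). ent n Q (i-1) (u+1) a b))"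
        "b < dim_col (mat s s (\<lambda>(a,b). ent n Q (i-1) (u+1) a b))"
      then have ab: "a < s" "b < s" by auto
      show "mat_delete M 1 0 $$ (a, b) = mat s s (\<lambda>(a,b). ent n Q (i-1) (u+1) a b) $$ (a, b)"
        unfolding mat_delete_def M_def using ab False
        by (cases "a = 0") (simp_all add: ent_def of_nat_diff, (rule Tf_cong; simp add: field_simps)+)
    qed (simp_all add: mat_delete_def M_def)
    then show ?thesis using False unfolding cofactor_def by simp
  qed
  finally show ?thesis unfolding M_def by simp
qed


lemma H_det:
  fixes Q :: "nat \<Rightarrow> complex \<Rightarrow> 'a::field"
  shows "1 \<le> s \<Longrightarrow> i \<le> 2*n+1 \<Longrightarrow> Hf n Q i (2*n+1+s) (u + of_nat i / 2) = - det (mat s s (\<lambda>(a,b). ent n Q i u a b))"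
proof (induction s arbitrary: i u)
  case 0
  then show ?case by simp
next
  case (Suc s)
  have a1: "u + of_nat i / 2 + (of_nat (2 * n + 3) - of_nat i) / 2 = (u + 1) + of_nat (2*n+1) / (2::complex)"
    by (simp add: field_simps)
  have a2: "i \<noteq> 0 \<Longrightarrow> u + of_nat i / 2 + 1 / 2 = (u + 1) + of_nat (i - 1) / (2::complex)"
    by (simp add: of_nat_diff field_simps)
  have sym: "Tf n Q (int (2*n+2) - int i) (u + of_nat i / 2) = - Tf n Q (int i) (u + of_nat i / 2)"
  proof -
    have e: "int (2*n+2) - int i = 2 * int n + 2 - int i" by simp
    show ?thesis unfolding e by (rule Tf_sym) (use Suc.prems in auto)
  qed
  show ?case
  proof (cases "s = 0")
    case True
    have e: "2*n+1+Suc s = Suc (2*n+1)" using True by simp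
    have h1: "Hf n Q (2*n+1) (2*n+1) x = -1" for x by (simp add: H_small)
    have h2: "Hf n Q (i-1) (2*n+1) x = 0" if "i \<noteq> 0" for x
    proof -
      have "i - 1 \<noteq> 2*n+1" using Suc.prems that by auto
      then show ?thesis using H_small[of "2*n+1" n Q "i-1" x] by simp
    qed
    have d: "det (mat (Suc s) (Suc s) (\<lambda>(a,b). ent n Q i u a b)) = Tf n Q (int (2*n+2) - int i) (u + of_nat i / 2)"
      using True by (subst det_single) (auto simp: ent_def)
    show ?thesis unfolding e Hf.simps(2) d sym using h1 h2 by simp
  next
    case False
    then have s1: "1 \<le> s" by simp
    have e: "2*n+1+Suc s = Suc (2*n+1+s)" by simp
    have IH1: "Hf n Q (2*n+1) (2*n+1+s) ((u+1) + of_nat (2*n+1) / 2) = - det (mat s s (\<lambda>(a,b). ent n Q (2*n+1) (u+1) a b))"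
      by (rule Suc.IH[OF s1]) simp
    have IH2: "i \<noteq> 0 \<Longrightarrow> Hf n Q (i-1) (2*n+1+s) ((u+1) + of_nat (i-1) / 2) = - det (mat s s (\<lambda>(a,b). ent n Q (i-1) (u+1) a b))"
      by (rule Suc.IH[OF s1]) (use Suc.prems in simp)
    show ?thesis
    proof (cases "i = 0")
      case True
      show ?thesis unfolding e Hf.simps(2) a1 IH1 det_rec[OF s1 Suc.prems(2)] sym using True by simp
    next
      case False
      show ?thesis unfolding e Hf.simps(2) a1 a2[OF False] IH1 IH2[OF False] det_rec[OF s1 Suc.prems(2)] sym
        using False by simp
    qed
  qed
qed

theorem mainTheorem7:
  fixes n :: nat and Q :: "nat \<Rightarrow> complex \<Rightarrow> 'a::field" and i :: nat
  assumes n2: "n \<ge> 2"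
    and indep: "alg_indep_Q n Q"
    and i_le: "i \<le> 2 * n + 1"
  shows "(\<forall>k u. k \<le> 2 * n + 1 \<longrightarrow>
            Hf n Q i k (u + of_nat i / 2) = (-1) ^ i * (if i = k then 1 else 0))
       \<and> (\<forall>k u. k \<ge> 2 * n + 2 \<longrightarrow>
            Hf n Q i k (u + of_nat i / 2) =
              - det (mat (k - (2 * n + 2) + 1) (k - (2 * n + 2) + 1) (\<lambda>(j0, l0).
                  let j = int j0 + 1; l = int l0 + 1;
                      lam = 1 + (if j = 1 then int (2 * n + 2) - int i - 1 else 0)
                  in Tf n Q (lam - j + l) (u + of_int (int (2 * n + 2) - 2 - lam + j + l) / 2))))
       \<and> (\<forall>w :: nat \<Rightarrow> complex \<Rightarrow> 'a.
            (\<forall>m\<in>{1..2 * n + 2}. \<forall>u. Lop n Q (w m) u = 0) \<longrightarrow>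
            (\<forall>u. casorati w [0..int (2 * n + 1)] u \<noteq> 0) \<longrightarrow>
            (\<forall>k u. Hf n Q i k (u + of_nat i / 2) =
                - casorati w ([0..int i - 1] @ [int i + 1..int (2 * n + 1)] @ [int k]) u
                  / casorati w [0..int (2 * n + 1)] u))"
proof (intro conjI allI impI)
  have n1: "1 \<le> n" using n2 by simp
  fix k u
  assume "k \<le> 2 * n + 1"
  then show "Hf n Q i k (u + of_nat i / 2) = (-1) ^ i * (if i = k then 1 else 0)" by (rule H_small)
next
  fix k u
  assume k: "k \<ge> 2 * n + 2"
  define s where "s = k - (2 * n + 2) + 1"
  have s1: "1 \<le> s" and ks: "k = 2*n+1+s" unfolding s_def using k by auto
  have "Hf n Q i k (u + of_nat i / 2) = - Dm n Q i s u"
    unfolding ks Dm_ent by (rule H_det[OF s1 i_le])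
  then show "Hf n Q i k (u + of_nat i / 2) =
              - det (mat (k - (2 * n + 2) + 1) (k - (2 * n + 2) + 1) (\<lambda>(j0, l0).
                  let j = int j0 + 1; l = int l0 + 1;
                      lam = 1 + (if j = 1 then int (2 * n + 2) - int i - 1 else 0)
                  in Tf n Q (lam - j + l) (u + of_int (int (2 * n + 2) - 2 - lam + j + l) / 2)))"
    unfolding Dm_def s_def .
next
  have n1: "1 \<le> n" using n2 by simp
  fix w :: "nat \<Rightarrow> complex \<Rightarrow> 'a" and k u
  assume L: "\<forall>m\<in>{1..2 * n + 2}. \<forall>u. Lop n Q (w m) u = 0"
    and C: "\<forall>u. casorati w [0..int (2 * n + 1)] u \<noteq> 0"
  have rec: "w r (u + of_nat k) = (\<Sum>j<2*n+2. (-1)^j * Hf n Q j k (u + of_nat j / 2) * w r (u + of_nat j))"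
    if "1 \<le> r" "r \<le> 2*n+2" for r
    by (rule w_rec[OF indep n1]) (use L that in auto)
  have "casorati w ([0..int i - 1] @ [int i + 1..int (2*n+1)] @ [int k]) u
      = - Hf n Q i k (u + of_nat i / 2) * casorati w [0..int (2*n+1)] u"
    by (rule cas_main[OF i_le, where h = "\<lambda>j. Hf n Q j k (u + of_nat j / 2)"]) (rule rec)
  then show "Hf n Q i k (u + of_nat i / 2) =
                - casorati w ([0..int i - 1] @ [int i + 1..int (2 * n + 1)] @ [int k]) u
                  / casorati w [0..int (2 * n + 1)] u"
    using C by (simp add: field_simps)
qed


end
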